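(* Assume there exists a set $\mathcal{X}_{\mathrm{f}}$ such that for all $z\in\mathcal{X}_{\mathrm{f}}$, $(z,Kz)\in\overline{\mathcal{Z}}_k$ for all $k\ge0$ and $(A+BK)z\in\mathcal{X}_{\mathrm{f}}$ (i.e., the terminal controller equals the tube feedback $K$), and that the terminal cost $V_{\mathrm{f}}(x)=x^\top P_{\mathrm{f}}x+p_{\mathrm{f}}^\top x$ satisfies $V_{\mathrm{f}}((A+BK)x)=V_{\mathrm{f}}(x)-\ell(x,Kx)$ for all $x\in\mathbb{R}^n$. Suppose Problem $\mathcal{P}_k$ (with the expected cost $\mathcal{J}_N$ below) is feasible at $k=0$. Then for all $k\in\mathbb{Z}_{\ge0}$, $$\mathbb{E}\big[\mathcal{J}_N^\star(x(k+1),z^\star_{1|k})-\mathcal{J}_N^\star(x(k),z^\star_{1|k-1})\big]\le -\ell(x(k),u(k))+\mathrm{tr}(P_{\mathrm{f}}\Sigma_{\mathrm{w}}),$$ where the expectation is over $w(k)$ given the past. Moreover, if $\ell$ is bounded from below on $\mathbb{R}^n\times\mathbb{R}^m$, then $$\limsup_{T\to\infty}\frac1T\sum_{k=0}^{T-1}\mathbb{E}[\ell(x(k),u(k))]\le \mathrm{tr}(P_{\mathrm{f}}\Sigma_{\mathrm{w}}).$$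
   Context: Consider $x(k+1)=Ax(k)+Bu(k)+w(k)$, $x(0)=x_0$, where the $w(k)\in\mathbb{R}^n$ are i.i.d., zero mean, covariance $\Sigma_{\mathrm{w}}\succ0$; $K\in\mathbb{R}^{m\times n}$ with $A_K:=A+BK$ Schur. Stage cost $\ell(x,u)=x^\top Qx+x^\top q+u^\top Ru+u^\top r$ with $Q,R\succeq0$. At time $k$, Problem $\mathcal{P}_k$ is: minimize $\mathcal{J}_N(x(k),z_{\cdot|k},v_{\cdot|k},\lambda_k)$ over $v_{0|k},\dots,v_{N-1|k}$, $z_{0|k},\dots,z_{N|k}$, $\lambda_k$ subject to $z_{0|k}=(1-\lambda_k)z^\star_{1|k-1}+\lambda_k x(k)$, $\lambda_k\in[0,1]$; $z_{i+1|k}=Az_{i|k}+Bv_{i|k}$; $(z_{i|k},v_{i|k})\in\overline{\mathcal{Z}}_{k+i}$ for $i=0,\dots,N-1$; $z_{N|k}\in\mathcal{X}_{\mathrm{f}}$, with given sets $\overline{\mathcal{Z}}_k\subseteq\mathbb{R}^{n+m}$ and $z^\star_{1|-1}:=x_0$. Its optimal value is $\mathcal{J}_N^\star(x(k),z^\star_{1|k-1})$ and $(z^\star_{\cdot|k},v^\star_{\cdot|k},\lambda^\star_k)$ a minimizer; the closed loop applies $u(k)=v^\star_{0|k}+K(x(k)-z^\star_{0|k})$. The cost is $\mathcal{J}_N=\mathbb{E}\big[\sum_{i=0}^{N-1}\ell(x_{i|k},u_{i|k})+V_{\mathrm{f}}(x_{N|k})\big]$ where $x_{0|k}=x(k)$,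 $u_{i|k}=v_{i|k}+K(x_{i|k}-z_{i|k})$, $x_{i+1|k}=Ax_{i|k}+Bu_{i|k}+w(k+i)$; equivalently, with the mean $\overline{x}_{0|k}=x(k)$, $\overline{u}_{i|k}=v_{i|k}+K(\overline{x}_{i|k}-z_{i|k})$, $\overline{x}_{i+1|k}=A\overline{x}_{i|k}+B\overline{u}_{i|k}$, one has $\mathcal{J}_N=\sum_{i=0}^{N-1}\ell(\overline{x}_{i|k},\overline{u}_{i|k})+V_{\mathrm{f}}(\overline{x}_{N|k})+\sum_{i=0}^{N-1}\mathrm{tr}((Q+K^\top RK)\Sigma_{\mathrm{x},i})+\mathrm{tr}(P_{\mathrm{f}}\Sigma_{\mathrm{x},N})$ with $\Sigma_{\mathrm{x},0}=0$, $\Sigma_{\mathrm{x},i+1}=A_K\Sigma_{\mathrm{x},i}A_K^\top+\Sigma_{\mathrm{w}}$. *)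

theory Defs
  imports "HOL-Analysis.Analysis" "HOL-Probability.Probability"
begin

definition psd_mat :: "real^'n^'n \<Rightarrow> bool" where
  "psd_mat M \<longleftrightarrow> transpose M = M \<and> (\<forall>x. 0 \<le> x \<bullet> (M *v x))"

definition pd_mat :: "real^'n^'n \<Rightarrow> bool" where
  "pd_mat M \<longleftrightarrow> transpose M = M \<and> (\<forall>x. x \<noteq> 0 \<longrightarrow> 0 < x \<bullet> (M *v x))"

definition cmat :: "real^'n^'n \<Rightarrow> complex^'n^'n" where
  "cmat M = (\<chi> i j. complex_of_real (M $ i $ j))"

definition schur :: "real^'n^'n \<Rightarrow> bool" where
  "schur M \<longleftrightarrow> (\<forall>(lam::complex) v. v \<noteq> 0 \<and> cmat M *v v = lam *s v \<longrightarrow> cmod lam < 1)"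

definition stage_cost :: "real^'n^'n \<Rightarrow> real^'n \<Rightarrow> real^'m^'m \<Rightarrow> real^'m
    \<Rightarrow> real^'n \<Rightarrow> real^'m \<Rightarrow> real" where
  "stage_cost Q q R r x u = x \<bullet> (Q *v x) + x \<bullet> q + u \<bullet> (R *v u) + u \<bullet> r"

definition term_cost :: "real^'n^'n \<Rightarrow> real^'n \<Rightarrow> real^'n \<Rightarrow> real" where
  "term_cost Pf pf x = x \<bullet> (Pf *v x) + pf \<bullet> x"

text \<open>Decision variables of Problem P_k: (z_{0..N|k}, v_{0..N-1|k}, lambda_k).\<close>
type_synonym ('n, 'm) dec = "(nat \<Rightarrow> real^'n) \<times> (nat \<Rightarrow> real^'m) \<times> real"

fun mean_state :: "real^'n^'n \<Rightarrow> real^'m^'n \<Rightarrow> real^'n^'m \<Rightarrow> real^'n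
    \<Rightarrow> (nat \<Rightarrow> real^'n) \<Rightarrow> (nat \<Rightarrow> real^'m) \<Rightarrow> nat \<Rightarrow> real^'n" where
  "mean_state A B K x z v 0 = x"
| "mean_state A B K x z v (Suc i) =
     (let xb = mean_state A B K x z v i in A *v xb + B *v (v i + K *v (xb - z i)))"

definition mean_input :: "real^'n^'n \<Rightarrow> real^'m^'n \<Rightarrow> real^'n^'m \<Rightarrow> real^'n
    \<Rightarrow> (nat \<Rightarrow> real^'n) \<Rightarrow> (nat \<Rightarrow> real^'m) \<Rightarrow> nat \<Rightarrow> real^'m" where
  "mean_input A B K x z v i = v i + K *v (mean_state A B K x z v i - z i)"

fun state_cov :: "real^'n^'n \<Rightarrow> real^'n^'n \<Rightarrow> nat \<Rightarrow> real^'n^'n" where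
  "state_cov AK Sw 0 = 0"
| "state_cov AK Sw (Suc i) = AK ** state_cov AK Sw i ** transpose AK + Sw"

text \<open>The expected cost \<open>J_N\<close>, written in its (stated) equivalent mean/covariance form.\<close>
definition cost_JN :: "nat \<Rightarrow> real^'n^'n \<Rightarrow> real^'m^'n \<Rightarrow> real^'n^'m
    \<Rightarrow> real^'n^'n \<Rightarrow> real^'n \<Rightarrow> real^'m^'m \<Rightarrow> real^'m
    \<Rightarrow> real^'n^'n \<Rightarrow> real^'n \<Rightarrow> real^'n^'n
    \<Rightarrow> real^'n \<Rightarrow> ('n, 'm) dec \<Rightarrow> real" where
  "cost_JN N A B K Q q R r Pf pf Sw x d =
     (case d of (z, v, lam) \<Rightarrow>
        (\<Sum>i<N. stage_cost Q q R r (mean_state A B K x z v i) (mean_input A B K x z v i))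
        + term_cost Pf pf (mean_state A B K x z v N)
        + (\<Sum>i<N. trace ((Q + transpose K ** R ** K) ** state_cov (A + B ** K) Sw i))
        + trace (Pf ** state_cov (A + B ** K) Sw N))"

text \<open>Feasible set of Problem P_k at state x with previous \<open>z*_{1|k-1} = zp\<close>.\<close>
definition feasible :: "nat \<Rightarrow> real^'n^'n \<Rightarrow> real^'m^'n \<Rightarrow> (nat \<Rightarrow> ((real^'n) \<times> (real^'m)) set)
    \<Rightarrow> (real^'n) set \<Rightarrow> nat \<Rightarrow> real^'n \<Rightarrow> real^'n \<Rightarrow> ('n, 'm) dec \<Rightarrow> bool" where
  "feasible N A B Zb Xf k x zp d =
     (case d of (z, v, lam) \<Rightarrow>
        z 0 = (1 - lam) *\<^sub>R zp + lam *\<^sub>R x \<and> 0 \<le> lam \<and> lam \<le> 1 \<and>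
        (\<forall>i<N. z (Suc i) = A *v z i + B *v v i) \<and>
        (\<forall>i<N. (z i, v i) \<in> Zb (k + i)) \<and>
        z N \<in> Xf)"

definition opt_val :: "nat \<Rightarrow> real^'n^'n \<Rightarrow> real^'m^'n \<Rightarrow> real^'n^'m
    \<Rightarrow> real^'n^'n \<Rightarrow> real^'n \<Rightarrow> real^'m^'m \<Rightarrow> real^'m
    \<Rightarrow> real^'n^'n \<Rightarrow> real^'n \<Rightarrow> real^'n^'n
    \<Rightarrow> (nat \<Rightarrow> ((real^'n) \<times> (real^'m)) set) \<Rightarrow> (real^'n) set
    \<Rightarrow> nat \<Rightarrow> real^'n \<Rightarrow> real^'n \<Rightarrow> real" where
  "opt_val N A B K Q q R r Pf pf Sw Zb Xf k x zp =
     Inf {cost_JN N A B K Q q R r Pf pf Sw x d | d. feasible N A B Zb Xf k x zp d}"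

definition is_minimizer :: "nat \<Rightarrow> real^'n^'n \<Rightarrow> real^'m^'n \<Rightarrow> real^'n^'m
    \<Rightarrow> real^'n^'n \<Rightarrow> real^'n \<Rightarrow> real^'m^'m \<Rightarrow> real^'m
    \<Rightarrow> real^'n^'n \<Rightarrow> real^'n \<Rightarrow> real^'n^'n
    \<Rightarrow> (nat \<Rightarrow> ((real^'n) \<times> (real^'m)) set) \<Rightarrow> (real^'n) set
    \<Rightarrow> nat \<Rightarrow> real^'n \<Rightarrow> real^'n \<Rightarrow> ('n, 'm) dec \<Rightarrow> bool" where
  "is_minimizer N A B K Q q R r Pf pf Sw Zb Xf k x zp d \<longleftrightarrow>
     feasible N A B Zb Xf k x zp d \<and>
     (\<forall>d'. feasible N A B Zb Xf k x zp d' \<longrightarrow>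
        cost_JN N A B K Q q R r Pf pf Sw x d \<le> cost_JN N A B K Q q R r Pf pf Sw x d')"

text \<open>\<open>sol k x zp\<close> is the minimizer of P_k selected by the controller. Given a noise sequence
  \<open>\<omega>\<close> (with \<open>w(k) = \<omega> k\<close>), \<open>closed_loop \<dots> \<omega> k = (x(k), z*_{1|k-1})\<close>, with
  \<open>z*_{1|-1} = x0\<close>.\<close>
definition cl_input :: "real^'n^'m \<Rightarrow> (nat \<Rightarrow> real^'n \<Rightarrow> real^'n \<Rightarrow> ('n, 'm) dec)
    \<Rightarrow> nat \<Rightarrow> (real^'n) \<times> (real^'n) \<Rightarrow> real^'m" where
  "cl_input K sol k s =
     (case sol k (fst s) (snd s) of (z, v, lam) \<Rightarrow> v 0 + K *v (fst s - z 0))"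

fun closed_loop :: "real^'n^'n \<Rightarrow> real^'m^'n \<Rightarrow> real^'n^'m
    \<Rightarrow> (nat \<Rightarrow> real^'n \<Rightarrow> real^'n \<Rightarrow> ('n, 'm) dec) \<Rightarrow> real^'n
    \<Rightarrow> (nat \<Rightarrow> real^'n) \<Rightarrow> nat \<Rightarrow> (real^'n) \<times> (real^'n)" where
  "closed_loop A B K sol x0 \<omega> 0 = (x0, x0)"
| "closed_loop A B K sol x0 \<omega> (Suc k) =
     (let s = closed_loop A B K sol x0 \<omega> k
      in (A *v fst s + B *v cl_input K sol k s + \<omega> k, fst (sol k (fst s) (snd s)) 1))"

end

theory Submission
  imports Defs "Jordan_Normal_Form.Spectral_Radius"
begin


fun mpow :: "real^'n^'n \<Rightarrow> nat \<Rightarrow> real^'n^'n" where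
  "mpow M 0 = Finite_Cartesian_Product.mat 1"
| "mpow M (Suc i) = M ** mpow M i"

definition qf :: "real^'n^'n \<Rightarrow> real^'n \<Rightarrow> real" where
  "qf S y = y \<bullet> (S *v y)"

definition lin_fun :: "(real^'n \<Rightarrow> real) \<Rightarrow> bool" where
  "lin_fun g \<longleftrightarrow> (\<exists>c. \<forall>w. g w = c \<bullet> w)"

lemma lin_fun_const0: "lin_fun (\<lambda>w. 0)"
  unfolding lin_fun_def by (rule exI[of _ 0]) simp

lemma lin_fun_add: "lin_fun f \<Longrightarrow> lin_fun g \<Longrightarrow> lin_fun (\<lambda>w. f w + g w)"
  unfolding lin_fun_def by (metis inner_add_left)

lemma lin_fun_diff: "lin_fun f \<Longrightarrow> lin_fun g \<Longrightarrow> lin_fun (\<lambda>w. f w - g w)"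
  unfolding lin_fun_def by (metis inner_diff_left)

lemma lin_fun_sum: "(\<And>i. i \<in> I \<Longrightarrow> lin_fun (f i)) \<Longrightarrow> lin_fun (\<lambda>w. \<Sum>i\<in>I. f i w)"
proof (induction I rule: infinite_finite_induct)
  case (infinite A) then show ?case by (simp add: lin_fun_const0)
next
  case empty then show ?case by (simp add: lin_fun_const0)
next
  case (insert x F) then show ?case by (simp add: lin_fun_add)
qed

lemma lin_fun_left: "lin_fun (\<lambda>w. y \<bullet> (M *v w))"
  unfolding lin_fun_def by (rule exI[of _ "y v* M"]) (metis dot_lmul_matrix inner_commute)

lemma lin_fun_right: "lin_fun (\<lambda>w. (M *v w) \<bullet> y)"
  unfolding lin_fun_def by (rule exI[of _ "y v* M"]) (metis dot_lmul_matrix inner_commute)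

lemma lin_fun_dot: "lin_fun (\<lambda>w. c \<bullet> w)"
  unfolding lin_fun_def by blast

lemma mpow_vec_Suc: "mpow M (Suc i) *v w = M *v (mpow M i *v w)"
  by (simp add: matrix_vector_mul_assoc)

lemma mvneg: "M *v (- y) = - (M *v (y::real^'n))"
  by (simp add: Finite_Cartesian_Product.vec_eq_iff matrix_vector_mult_def sum_negf)

lemma qf_neg[simp]: "qf S (- y) = qf S y"
  unfolding qf_def by (simp add: mvneg)

lemma stage_cost_add:
  "stage_cost Q q R r (y + a) (u + b) = stage_cost Q q R r y u
     + (y \<bullet> (Q *v a) + a \<bullet> (Q *v y) + a \<bullet> q + u \<bullet> (R *v b) + b \<bullet> (R *v u) + b \<bullet> r)
     + (qf Q a + qf R b)"
  unfolding stage_cost_def qf_def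
  by (simp add: matrix_vector_right_distrib inner_add_left inner_add_right algebra_simps)

lemma term_cost_add:
  "term_cost Pf pf (y + a) = term_cost Pf pf y + (y \<bullet> (Pf *v a) + a \<bullet> (Pf *v y) + pf \<bullet> a) + qf Pf a"
  unfolding term_cost_def qf_def
  by (simp add: matrix_vector_right_distrib inner_add_left inner_add_right algebra_simps)


locale mpc =
  fixes A :: "real^'n^'n" and B :: "real^'m^'n" and K :: "real^'n^'m"
    and Q :: "real^'n^'n" and q :: "real^'n" and R :: "real^'m^'m" and r :: "real^'m"
    and Pf :: "real^'n^'n" and pf :: "real^'n"
    and Sw :: "real^'n^'n" and D :: "(real^'n) measure"
    and Zb :: "nat \<Rightarrow> ((real^'n) \<times> (real^'m)) set" and Xf :: "(real^'n) set"
    and N :: nat and x0 :: "real^'n"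
    and sol :: "nat \<Rightarrow> real^'n \<Rightarrow> real^'n \<Rightarrow> ((nat \<Rightarrow> real^'n) \<times> (nat \<Rightarrow> real^'m) \<times> real)"
  assumes N_pos: "1 \<le> N"
    and schur_AK: "schur (A + B ** K)"
    and Q_psd: "psd_mat Q" and R_psd: "psd_mat R"
    and D_prob: "prob_space D" and D_sets: "sets D = sets borel"
    and D_int1: "\<And>i. integrable D (\<lambda>w. w $ i)"
    and D_int2: "\<And>i j. integrable D (\<lambda>w. w $ i * w $ j)"
    and D_mean: "\<And>i. (\<integral>w. w $ i \<partial>D) = 0"
    and D_cov: "\<And>i j. (\<integral>w. w $ i * w $ j \<partial>D) = Sw $ i $ j"
    and Xf_Zb: "\<And>z k. z \<in> Xf \<Longrightarrow> (z, K *v z) \<in> Zb k"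
    and Xf_inv: "\<And>z. z \<in> Xf \<Longrightarrow> (A + B ** K) *v z \<in> Xf"
    and Vf_decr: "\<And>y. term_cost Pf pf ((A + B ** K) *v y) = term_cost Pf pf y - stage_cost Q q R r y (K *v y)"
    and feas0: "\<exists>d. feasible N A B Zb Xf 0 x0 x0 d"
    and sol_min: "\<And>k y zp. (\<exists>d. feasible N A B Zb Xf k y zp d) \<Longrightarrow>
        is_minimizer N A B K Q q R r Pf pf Sw Zb Xf k y zp (sol k y zp)"
    and sol_meas: "\<And>k i.
        (\<lambda>p. fst (sol k (fst p) (snd p)) i) \<in> borel_measurable borel \<and>
        (\<lambda>p. fst (snd (sol k (fst p) (snd p))) i) \<in> borel_measurable borel \<and>
        (\<lambda>p. snd (snd (sol k (fst p) (snd p)))) \<in> borel_measurable borel"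
begin

abbreviation "ell \<equiv> stage_cost Q q R r"
abbreviation "Vf \<equiv> term_cost Pf pf"
abbreviation "AK \<equiv> A + B ** K"
abbreviation "cost \<equiv> cost_JN N A B K Q q R r Pf pf Sw"
abbreviation "feas \<equiv> feasible N A B Zb Xf"
abbreviation "J \<equiv> opt_val N A B K Q q R r Pf pf Sw Zb Xf"
abbreviation "cl \<equiv> closed_loop A B K sol x0"
abbreviation "ms \<equiv> mean_state A B K"
abbreviation "mi \<equiv> mean_input A B K"

definition covs :: real where
  "covs = (\<Sum>i<N. trace ((Q + transpose K ** R ** K) ** state_cov AK Sw i))
        + trace (Pf ** state_cov AK Sw N)"

definition shd :: "('n, 'm) dec \<Rightarrow> ('n, 'm) dec" where
  "shd d = (case d of (z, v, lam) \<Rightarrow>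
     (\<lambda>i. if i < N then z (Suc i) else AK *v z N,
      \<lambda>i. if Suc i < N then v (Suc i) else K *v z N, 0))"

lemma AK_mult: "AK *v y = A *v y + B *v (K *v y)"
  by (simp add: matrix_vector_mult_add_rdistrib matrix_vector_mul_assoc)

lemma cost_eq: "cost x (z, v, lam) =
   (\<Sum>i<N. ell (ms x z v i) (mi x z v i)) + Vf (ms x z v N) + covs"
  by (simp add: cost_JN_def covs_def)

lemma feas_shift:
  assumes "feas k x zp (z, v, lam)"
  shows "feas (Suc k) x' (z 1) (shd (z, v, lam))"
proof -
  obtain m where m: "N = Suc m" using N_pos by (cases N) auto
  from assms have h0: "\<forall>i<N. z (Suc i) = A *v z i + B *v v i"
    and h1: "\<forall>i<N. (z i, v i) \<in> Zb (k + i)" and h2: "z N \<in> Xf"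
    unfolding feasible_def by auto
  have f1: "(if 0 < N then z (Suc 0) else AK *v z N) = z (Suc 0)" using m by simp
  have f2: "(if Suc i < N then z (Suc (Suc i)) else AK *v z N) =
          A *v (if i < N then z (Suc i) else AK *v z N) + B *v (if Suc i < N then v (Suc i) else K *v z N)"
    if i: "i < N" for i
  proof (cases "Suc i < N")
    case True then show ?thesis using h0 i by simp
  next
    case False then have "N = Suc i" using i by simp
    then show ?thesis by (simp add: AK_mult)
  qed
  have f3: "(if i < N then z (Suc i) else AK *v z N, if Suc i < N then v (Suc i) else K *v z N) \<in> Zb (Suc k + i)"
    if i: "i < N" for i
  proof (cases "Suc i < N")
    case True then show ?thesis using h1 by (auto dest: spec[of _ "Suc i"])
  next
    case False then have "N = Suc i" using i by simp
    then show ?thesis using Xf_Zb[OF h2] by simp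
  qed
  have f4: "AK *v z N \<in> Xf" using Xf_inv[OF h2] .
  show ?thesis unfolding feasible_def shd_def prod.case
    using f1 f2 f3 f4 by (simp only: One_nat_def) simp
qed

definition shz :: "(nat \<Rightarrow> real^'n) \<Rightarrow> nat \<Rightarrow> real^'n" where
  "shz z = (\<lambda>i. if i < N then z (Suc i) else AK *v z N)"
definition shv :: "(nat \<Rightarrow> real^'n) \<Rightarrow> (nat \<Rightarrow> real^'m) \<Rightarrow> nat \<Rightarrow> real^'m" where
  "shv z v = (\<lambda>i. if Suc i < N then v (Suc i) else K *v z N)"

lemma shd_eq: "shd (z, v, lam) = (shz z, shv z v, 0)"
  by (simp add: shd_def shz_def shv_def)

lemma ms_Suc: "ms x z v (Suc i) = A *v ms x z v i + B *v (v i + K *v (ms x z v i - z i))"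
  by (simp add: Let_def)

declare mean_state.simps(2)[simp del]

lemma ms_shift:
  assumes m: "N = Suc m"
  shows "i \<le> m \<Longrightarrow> ms (ms x z v 1 + w) (shz z) (shv z v) i = ms x z v (Suc i) + mpow AK i *v w"
proof (induction i)
  case 0 then show ?case by simp
next
  case (Suc i)
  then have i1: "Suc i < N" and i2: "i < N" and i3: "i \<le> m" using m by auto
  have IH: "ms (ms x z v 1 + w) (shz z) (shv z v) i = ms x z v (Suc i) + mpow AK i *v w"
    using Suc.IH i3 by simp
  have "ms (ms x z v 1 + w) (shz z) (shv z v) (Suc i) = A *v (ms x z v (Suc i) + mpow AK i *v w)
      + B *v (v (Suc i) + K *v (ms x z v (Suc i) + mpow AK i *v w - z (Suc i)))"
    by (simp only: ms_Suc[of "ms x z v 1 + w"] IH) (simp add: shz_def shv_def i1 i2)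
  also have "\<dots> = ms x z v (Suc (Suc i)) + mpow AK (Suc i) *v w"
    by (simp only: ms_Suc[of x z v "Suc i"] mpow_vec_Suc AK_mult matrix_vector_right_distrib
        matrix_vector_mult_diff_distrib) (simp add: algebra_simps)
  finally show ?case .
qed

lemma ms_shift_N:
  assumes m: "N = Suc m"
  shows "ms x' (shz z) (shv z v) N = AK *v ms x' (shz z) (shv z v) m"
proof -
  have mN: "m < N" and nS: "\<not> Suc m < N" and zN: "z (Suc m) = z N" using m by auto
  have "ms x' (shz z) (shv z v) N = ms x' (shz z) (shv z v) (Suc m)"
    using m by (rule arg_cong)
  also have "\<dots> = A *v ms x' (shz z) (shv z v) m + B *v (K *v z N + K *v (ms x' (shz z) (shv z v) m - z N))"
    by (simp add: ms_Suc shz_def shv_def mN nS zN)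
  also have "\<dots> = AK *v ms x' (shz z) (shv z v) m"
    by (simp add: AK_mult matrix_vector_right_distrib matrix_vector_mult_diff_distrib)
  finally show ?thesis .
qed

lemma mi_shift:
  assumes m: "N = Suc m" and i: "i < m"
  shows "mi (ms x z v 1 + w) (shz z) (shv z v) i = mi x z v (Suc i) + K *v (mpow AK i *v w)"
proof -
  have i1: "Suc i < N" "i < N" using m i by auto
  have "ms (ms x z v 1 + w) (shz z) (shv z v) i = ms x z v (Suc i) + mpow AK i *v w"
    using ms_shift[OF m] i by simp
  then show ?thesis using i1
    by (simp add: mean_input_def shz_def shv_def matrix_vector_right_distrib
        matrix_vector_mult_diff_distrib algebra_simps del: mpow.simps)
qed

lemma mi_shift_m:
  assumes m: "N = Suc m"
  shows "mi x' (shz z) (shv z v) m = K *v ms x' (shz z) (shv z v) m"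
proof -
  have mN: "m < N" and nS: "\<not> Suc m < N" and zN: "z (Suc m) = z N" using m by auto
  show ?thesis
    by (simp add: mean_input_def shz_def shv_def mN nS zN matrix_vector_right_distrib
        matrix_vector_mult_diff_distrib)
qed

lemma cost_shift:
  assumes m: "N = Suc m"
  shows "cost (ms x z v 1 + w) (shd (z, v, lam)) =
     (\<Sum>i<m. ell (ms x z v (Suc i) + mpow AK i *v w) (mi x z v (Suc i) + K *v (mpow AK i *v w)))
     + Vf (ms x z v N + mpow AK m *v w) + covs"
proof -
  let ?x' = "ms x z v 1 + w"
  let ?y = "ms ?x' (shz z) (shv z v) m"
  let ?f = "\<lambda>i. ell (ms ?x' (shz z) (shv z v) i) (mi ?x' (shz z) (shv z v) i)"
  have y: "?y = ms x z v N + mpow AK m *v w" using ms_shift[OF m, of m] m by simp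
  have s: "(\<Sum>i<m. ?f i) =
     (\<Sum>i<m. ell (ms x z v (Suc i) + mpow AK i *v w) (mi x z v (Suc i) + K *v (mpow AK i *v w)))"
  proof (rule sum.cong[OF refl])
    fix i assume "i \<in> {..<m}"
    then have i: "i < m" by simp
    show "?f i = ell (ms x z v (Suc i) + mpow AK i *v w) (mi x z v (Suc i) + K *v (mpow AK i *v w))"
      using ms_shift[OF m, of i x z v w] mi_shift[OF m i, of x z v w] i by (simp del: mpow.simps)
  qed
  have sN: "(\<Sum>i<N. ?f i) = (\<Sum>i<m. ?f i) + ?f m"
    using m by simp
  have "cost ?x' (shd (z, v, lam)) = (\<Sum>i<m. ?f i) + ell ?y (K *v ?y) + Vf (AK *v ?y) + covs"
    unfolding shd_eq cost_eq sN ms_shift_N[OF m] mi_shift_m[OF m] by simp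
  also have "\<dots> = (\<Sum>i<m. ?f i) + Vf ?y + covs"
    using Vf_decr[of ?y] by simp
  finally show ?thesis using s y by simp
qed

lemma cost_orig:
  assumes m: "N = Suc m"
  shows "cost x (z, v, lam) = ell x (mi x z v 0)
     + (\<Sum>i<m. ell (ms x z v (Suc i)) (mi x z v (Suc i))) + Vf (ms x z v N) + covs"
proof -
  have "(\<Sum>i<N. ell (ms x z v i) (mi x z v i)) = (\<Sum>i<Suc m. ell (ms x z v i) (mi x z v i))"
    using m by simp
  also have "\<dots> = ell x (mi x z v 0) + (\<Sum>i<m. ell (ms x z v (Suc i)) (mi x z v (Suc i)))"
    by (simp only: sum.lessThan_Suc_shift) simp
  finally show ?thesis unfolding cost_eq by simp
qed

lemma qf_decr: "qf Pf (AK *v y) = qf Pf y - (qf Q y + qf R (K *v y))"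
proof -
  have a: "Vf (AK *v y) = Vf y - ell y (K *v y)" by (rule Vf_decr)
  have b: "Vf (AK *v (-y)) = Vf (-y) - ell (-y) (K *v (-y))" by (rule Vf_decr)
  show ?thesis using a b
    by (simp add: term_cost_def stage_cost_def qf_def mvneg)
qed

lemma quad_tel: "(\<Sum>i<m. qf Q (mpow AK i *v w) + qf R (K *v (mpow AK i *v w))) + qf Pf (mpow AK m *v w) = qf Pf w"
proof (induction m)
  case 0 then show ?case by simp
next
  case (Suc m)
  show ?case using Suc qf_decr[of "mpow AK m *v w"] by (simp add: mpow_vec_Suc del: mpow.simps)
qed

lemma cand_decomp:
  assumes m: "N = Suc m"
  shows "\<exists>c. \<forall>w. cost (ms x z v 1 + w) (shd (z, v, lam)) =
            cost x (z, v, lam) - ell x (mi x z v 0) + c \<bullet> w + qf Pf w"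
proof -
  let ?P = "\<lambda>i w. mpow AK i *v w"
  let ?xs = "ms x z v" and ?us = "mi x z v"
  let ?L = "\<lambda>w. (\<Sum>i<m. (?xs (Suc i) \<bullet> (Q *v ?P i w) + ?P i w \<bullet> (Q *v ?xs (Suc i)) + ?P i w \<bullet> q
            + ?us (Suc i) \<bullet> (R *v (K *v ?P i w)) + (K *v ?P i w) \<bullet> (R *v ?us (Suc i)) + (K *v ?P i w) \<bullet> r))
            + (?xs N \<bullet> (Pf *v ?P m w) + ?P m w \<bullet> (Pf *v ?xs N) + pf \<bullet> ?P m w)"
  have lin: "lin_fun ?L"
    by (intro lin_fun_add lin_fun_sum; (simp only: matrix_vector_mul_assoc)?; rule lin_fun_left lin_fun_right)
  then obtain c where c: "\<And>w. ?L w = c \<bullet> w" unfolding lin_fun_def by blast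
  have eq: "cost (?xs 1 + w) (shd (z, v, lam)) = cost x (z, v, lam) - ell x (?us 0) + ?L w + qf Pf w" for w
  proof -
    have e1: "(\<Sum>i<m. ell (?xs (Suc i) + ?P i w) (?us (Suc i) + K *v ?P i w)) =
      (\<Sum>i<m. ell (?xs (Suc i)) (?us (Suc i))) +
      (\<Sum>i<m. (?xs (Suc i) \<bullet> (Q *v ?P i w) + ?P i w \<bullet> (Q *v ?xs (Suc i)) + ?P i w \<bullet> q
            + ?us (Suc i) \<bullet> (R *v (K *v ?P i w)) + (K *v ?P i w) \<bullet> (R *v ?us (Suc i)) + (K *v ?P i w) \<bullet> r))
      + (\<Sum>i<m. qf Q (?P i w) + qf R (K *v ?P i w))"
      by (simp only: stage_cost_add sum.distrib)
    have e2: "Vf (?xs N + ?P m w) = Vf (?xs N) + (?xs N \<bullet> (Pf *v ?P m w) + ?P m w \<bullet> (Pf *v ?xs N) + pf \<bullet> ?P m w)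
       + qf Pf (?P m w)" by (rule term_cost_add)
    have qt: "(\<Sum>i<m. qf Q (?P i w) + qf R (K *v ?P i w)) + qf Pf (?P m w) = qf Pf w"
      by (rule quad_tel)
    show ?thesis
      unfolding cost_shift[OF m] cost_orig[OF m] e1 e2 using qt by linarith
  qed
  show ?thesis
  proof (intro exI[of _ c] allI)
    fix w show "cost (?xs 1 + w) (shd (z, v, lam)) = cost x (z, v, lam) - ell x (?us 0) + c \<bullet> w + qf Pf w"
      unfolding eq c ..
  qed
qed

end


context mpc begin

lemma D_int_lin: "integrable D (\<lambda>w. c \<bullet> w)" "(\<integral>w. c \<bullet> w \<partial>D) = 0"
proof -
  have e: "(\<lambda>w. c \<bullet> w) = (\<lambda>w. \<Sum>i\<in>UNIV. c $ i * w $ i)"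
    by (simp add: inner_vec_def)
  show "integrable D (\<lambda>w. c \<bullet> w)" unfolding e
    by (intro Bochner_Integration.integrable_sum Bochner_Integration.integrable_mult_right D_int1)
  show "(\<integral>w. c \<bullet> w \<partial>D) = 0" unfolding e
    by (subst Bochner_Integration.integral_sum) (auto intro!: Bochner_Integration.integrable_mult_right D_int1 simp: D_mean)
qed

lemma qf_expand: "qf S w = (\<Sum>i\<in>UNIV. \<Sum>j\<in>UNIV. S $ i $ j * (w $ i * w $ j))"
  unfolding qf_def by (simp add: inner_vec_def matrix_vector_mult_def sum_distrib_left algebra_simps)

lemma D_int_qf: "integrable D (qf S)" "(\<integral>w. qf S w \<partial>D) = (\<Sum>i\<in>UNIV. \<Sum>j\<in>UNIV. S $ i $ j * Sw $ i $ j)"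
proof -
  show "integrable D (qf S)" unfolding qf_expand[abs_def]
    by (intro Bochner_Integration.integrable_sum Bochner_Integration.integrable_mult_right D_int2)
  show "(\<integral>w. qf S w \<partial>D) = (\<Sum>i\<in>UNIV. \<Sum>j\<in>UNIV. S $ i $ j * Sw $ i $ j)" unfolding qf_expand
    by (subst Bochner_Integration.integral_sum, auto intro!: Bochner_Integration.integrable_sum Bochner_Integration.integrable_mult_right D_int2,
        rule sum.cong[OF refl], subst Bochner_Integration.integral_sum, auto intro!: Bochner_Integration.integrable_mult_right D_int2 simp: D_cov)
qed

lemma Sw_sym: "Sw $ i $ j = Sw $ j $ i"
  using D_cov[of i j] D_cov[of j i] by (simp add: mult.commute)

lemma trace_Pf_Sw: "trace (Pf ** Sw) = (\<Sum>i\<in>UNIV. \<Sum>j\<in>UNIV. Pf $ i $ j * Sw $ i $ j)"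
  unfolding trace_def matrix_matrix_mult_def by (simp add: Sw_sym)

lemma opt_val_min:
  assumes "is_minimizer N A B K Q q R r Pf pf Sw Zb Xf k x zp d"
  shows "J k x zp = cost x d"
proof -
  let ?S = "{cost x d | d. feas k x zp d}"
  from assms have f: "feas k x zp d" and le: "\<And>d'. feas k x zp d' \<Longrightarrow> cost x d \<le> cost x d'"
    unfolding is_minimizer_def by auto
  obtain a b c where dd: "d = (a, b, c)" by (cases d) auto
  have mem: "cost x d \<in> ?S" using f unfolding dd by blast
  have lo: "\<And>y. y \<in> ?S \<Longrightarrow> cost x d \<le> y" using le by blast
  have "Inf ?S = cost x d"
    by (rule cInf_eq_minimum[OF mem lo])
  then show ?thesis unfolding opt_val_def by simp
qed

lemma opt_val_le:
  assumes "is_minimizer N A B K Q q R r Pf pf Sw Zb Xf k x zp d" "feas k x zp d'"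
  shows "J k x zp \<le> cost x d'"
proof -
  have "cost x d \<le> cost x d'" using assms unfolding is_minimizer_def by blast
  then show ?thesis using opt_val_min[OF assms(1)] by simp
qed

lemma cl_indep: "(\<And>j. j < k \<Longrightarrow> om j = om' j) \<Longrightarrow> cl om k = cl om' k"
proof (induction k)
  case 0 then show ?case by simp
next
  case (Suc k)
  then have "cl om k = cl om' k" by auto
  then show ?case using Suc.prems[of k] by (simp add: Let_def)
qed

lemma cl_upd: "cl (om(k := w)) k = cl om k"
  by (rule cl_indep) simp

lemma feas_cl: "\<exists>d. feas k (fst (cl om k)) (snd (cl om k)) d"
proof (induction k)
  case 0 then show ?case using feas0 by simp
next
  case (Suc k)
  let ?s = "cl om k"
  obtain z v lam where d: "sol k (fst ?s) (snd ?s) = (z, v, lam)" by (cases "sol k (fst ?s) (snd ?s)") auto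
  from sol_min[OF Suc.IH] have "feas k (fst ?s) (snd ?s) (z, v, lam)"
    unfolding is_minimizer_def d by simp
  from feas_shift[OF this] have "feas (Suc k) (fst (cl om (Suc k))) (snd (cl om (Suc k))) (shd (z, v, lam))"
    using d by (simp add: Let_def)
  then show ?case by blast
qed

lemma min_cl: "is_minimizer N A B K Q q R r Pf pf Sw Zb Xf k (fst (cl om k)) (snd (cl om k)) (sol k (fst (cl om k)) (snd (cl om k)))"
  by (rule sol_min[OF feas_cl])

lemma step_bound:
  "\<exists>c. \<forall>w. J (Suc k) (fst (cl (om(k := w)) (Suc k))) (snd (cl (om(k := w)) (Suc k)))
      \<le> J k (fst (cl om k)) (snd (cl om k)) - ell (fst (cl om k)) (cl_input K sol k (cl om k)) + c \<bullet> w + qf Pf w"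
proof -
  obtain m where m: "N = Suc m" using N_pos by (cases N) auto
  let ?s = "cl om k"
  let ?x = "fst ?s"
  obtain z v lam where d: "sol k (fst ?s) (snd ?s) = (z, v, lam)" by (cases "sol k (fst ?s) (snd ?s)") auto
  have mn: "is_minimizer N A B K Q q R r Pf pf Sw Zb Xf k ?x (snd ?s) (z, v, lam)"
    using min_cl[of k om] d by simp
  then have fd: "feas k ?x (snd ?s) (z, v, lam)" unfolding is_minimizer_def by simp
  have Jk: "J k ?x (snd ?s) = cost ?x (z, v, lam)" by (rule opt_val_min[OF mn])
  have u: "cl_input K sol k ?s = mi ?x z v 0" by (simp add: cl_input_def d mean_input_def)
  obtain c where c: "\<And>w. cost (ms ?x z v 1 + w) (shd (z, v, lam)) =
            cost ?x (z, v, lam) - ell ?x (mi ?x z v 0) + c \<bullet> w + qf Pf w"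
    using cand_decomp[OF m] by blast
  have "J (Suc k) (fst (cl (om(k := w)) (Suc k))) (snd (cl (om(k := w)) (Suc k)))
      \<le> J k ?x (snd ?s) - ell ?x (cl_input K sol k ?s) + c \<bullet> w + qf Pf w" for w
  proof -
    have clS: "cl (om(k := w)) (Suc k) = (ms ?x z v 1 + w, z 1)"
      using cl_upd[of om k w] d
      by (simp add: Let_def cl_input_def ms_Suc mean_input_def)
    have f2: "feas (Suc k) (ms ?x z v 1 + w) (z 1) (shd (z, v, lam))"
      by (rule feas_shift[OF fd])
    have mn2: "is_minimizer N A B K Q q R r Pf pf Sw Zb Xf (Suc k) (ms ?x z v 1 + w) (z 1)
          (sol (Suc k) (ms ?x z v 1 + w) (z 1))"
      using sol_min f2 by blast
    show ?thesis unfolding clS using opt_val_le[OF mn2 f2] c[of w] Jk u by simp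
  qed
  then show ?thesis by blast
qed

lemma part1:
  assumes int: "integrable D (\<lambda>w. J (k + 1) (fst (cl (om(k := w)) (k + 1))) (snd (cl (om(k := w)) (k + 1)))
                          - J k (fst (cl om k)) (snd (cl om k)))"
  shows "(\<integral>w. J (k + 1) (fst (cl (om(k := w)) (k + 1))) (snd (cl (om(k := w)) (k + 1)))
             - J k (fst (cl om k)) (snd (cl om k)) \<partial>D)
          \<le> - ell (fst (cl om k)) (cl_input K sol k (cl om k)) + trace (Pf ** Sw)"
proof -
  interpret D: prob_space D by (rule D_prob)
  obtain c where c: "\<And>w. J (Suc k) (fst (cl (om(k := w)) (Suc k))) (snd (cl (om(k := w)) (Suc k)))
      \<le> J k (fst (cl om k)) (snd (cl om k)) - ell (fst (cl om k)) (cl_input K sol k (cl om k)) + c \<bullet> w + qf Pf w"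
    using step_bound by blast
  let ?e = "- ell (fst (cl om k)) (cl_input K sol k (cl om k))"
  have i2: "integrable D (\<lambda>w. ?e + c \<bullet> w + qf Pf w)"
    by (intro Bochner_Integration.integrable_add D_int_lin D_int_qf D.integrable_const)
  have "(\<integral>w. J (k + 1) (fst (cl (om(k := w)) (k + 1))) (snd (cl (om(k := w)) (k + 1)))
             - J k (fst (cl om k)) (snd (cl om k)) \<partial>D) \<le> (\<integral>w. ?e + c \<bullet> w + qf Pf w \<partial>D)"
  proof (rule integral_mono[OF int i2])
    fix w
    have "J (k + 1) (fst (cl (om(k := w)) (k + 1))) (snd (cl (om(k := w)) (k + 1)))
      \<le> J k (fst (cl om k)) (snd (cl om k)) - ell (fst (cl om k)) (cl_input K sol k (cl om k)) + c \<bullet> w + qf Pf w"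
      using c[of w] by (simp only: Suc_eq_plus1)
    then show "J (k + 1) (fst (cl (om(k := w)) (k + 1))) (snd (cl (om(k := w)) (k + 1)))
             - J k (fst (cl om k)) (snd (cl om k)) \<le> ?e + c \<bullet> w + qf Pf w" by linarith
  qed
  also have "\<dots> = ?e + trace (Pf ** Sw)"
    using D_int_lin[of c] D_int_qf[of Pf] i2
    by (simp add: Bochner_Integration.integral_add D.integrable_const trace_Pf_Sw D.prob_space)
  finally show ?thesis .
qed

end



lemma mpow_comm: "mpow M k ** M = M ** mpow M k"
  by (induction k) (simp_all add: matrix_mul_assoc[symmetric])

lemma schur_pow_tendsto:
  fixes M :: "real^'n^'n"
  assumes sch: "schur M"
  shows "(\<lambda>k. mpow M k *v y) \<longlonglongrightarrow> 0"
proof -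
  define d where "d = CARD('n)"
  have dpos: "d > 0" unfolding d_def by simp
  obtain e where e: "bij_betw e {0..<d} (UNIV::'n set)"
    using ex_bij_betw_nat_finite[of "UNIV::'n set"] unfolding d_def by auto
  have e_in: "\<And>i. i < d \<Longrightarrow> e i \<in> UNIV" by simp
  define CM :: "complex Matrix.mat" where "CM = Matrix.mat d d (\<lambda>(i,j). complex_of_real (M $ e i $ e j))"
  define cv where "cv = (\<lambda>y::real^'n. Matrix.vec d (\<lambda>i. complex_of_real (y $ e i)))"
  have CM_c: "CM \<in> carrier_mat d d" unfolding CM_def by simp
  have cv_c: "cv y \<in> carrier_vec d" for y unfolding cv_def by simp
  have sum_e: "(\<Sum>j\<in>{0..<d}. f (e j)) = (\<Sum>j\<in>UNIV. f j)" for f :: "'n \<Rightarrow> 'b::comm_monoid_add"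
    using sum.reindex_bij_betw[OF e] .
  have L_mv: "CM *\<^sub>v cv y = cv (M *v y)" for y
  proof (rule eq_vecI)
    fix i assume "i < dim_vec (cv (M *v y))"
    then have i: "i < d" unfolding cv_def by simp
    have "(CM *\<^sub>v cv y) $ i = (\<Sum>j\<in>{0..<d}. CM $$ (i, j) * cv y $ j)"
      using i CM_c cv_c[of y] by (simp add: scalar_prod_def)
    also have "\<dots> = (\<Sum>j\<in>{0..<d}. complex_of_real (M $ e i $ e j * y $ e j))"
      using i by (intro sum.cong) (auto simp: CM_def cv_def)
    also have "\<dots> = complex_of_real (\<Sum>j\<in>{0..<d}. M $ e i $ e j * y $ e j)"
      by simp
    also have "\<dots> = complex_of_real (\<Sum>j\<in>UNIV. M $ e i $ j * y $ j)"
      by (simp only: sum_e[of "\<lambda>j. M $ e i $ j * y $ j"])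
    also have "\<dots> = cv (M *v y) $ i"
      using i by (simp add: cv_def matrix_vector_mult_def)
    finally show "(CM *\<^sub>v cv y) $ i = cv (M *v y) $ i" .
  qed (simp add: CM_def cv_def)
  have L_pow: "CM ^\<^sub>m k *\<^sub>v cv y = cv (mpow M k *v y)" for k y
  proof (induction k arbitrary: y)
    case 0 then show ?case using CM_c cv_c[of y] by simp
  next
    case (Suc k)
    have "CM ^\<^sub>m Suc k *\<^sub>v cv y = CM ^\<^sub>m k *\<^sub>v (CM *\<^sub>v cv y)"
      using assoc_mult_mat_vec[OF pow_carrier_mat[OF CM_c, of k] CM_c cv_c[of y]] by simp
    also have "\<dots> = cv (mpow M k *v (M *v y))" by (simp add: L_mv Suc.IH)
    also have "mpow M k *v (M *v y) = mpow M (Suc k) *v y"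
      by (simp add: matrix_vector_mul_assoc mpow_comm)
    finally show ?case .
  qed
  have L_eig: "cmod mu < 1" if ev: "eigenvalue CM mu" for mu
  proof -
    from ev obtain v where v: "v \<in> carrier_vec d" "v \<noteq> 0\<^sub>v d" "CM *\<^sub>v v = mu \<cdot>\<^sub>v v"
      unfolding eigenvalue_def eigenvector_def using CM_c by auto
    define ei where "ei = the_inv_into {0..<d} e"
    have ei1: "ei (e i) = i" if "i < d" for i
      unfolding ei_def using e that by (simp add: bij_betw_def the_inv_into_f_f)
    have ei2: "e (ei j) = j" for j
      unfolding ei_def using e
      by (auto simp: bij_betw_def f_the_inv_into_f)
    have ei3: "ei j < d" for j
      unfolding ei_def using e the_inv_into_into[of e "{0..<d}" j "{0..<d}"]
      by (auto simp: bij_betw_def)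
    define V :: "complex^'n" where "V = (\<chi> j. v $ ei j)"
    have "cmat M *v V = mu *s V"
    proof (rule Finite_Cartesian_Product.vec_eq_iff[THEN iffD2], rule allI)
      fix j :: 'n
      let ?i = "ei j"
      have "(cmat M *v V) $ j = (\<Sum>l\<in>UNIV. complex_of_real (M $ j $ l) * V $ l)"
        by (simp add: matrix_vector_mult_def cmat_def)
      also have "\<dots> = (\<Sum>l\<in>{0..<d}. complex_of_real (M $ j $ e l) * V $ e l)"
        by (simp add: sum_e[of "\<lambda>l. complex_of_real (M $ j $ l) * V $ l"])
      also have "\<dots> = (\<Sum>l\<in>{0..<d}. CM $$ (?i, l) * v $ l)"
        using ei3[of j] by (intro sum.cong) (auto simp: CM_def V_def ei1 ei2)
      also have "\<dots> = (CM *\<^sub>v v) $ ?i"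
        using ei3[of j] CM_c v(1) by (simp add: scalar_prod_def)
      also have "\<dots> = mu * V $ j" using v(3) ei3[of j] v(1) by (simp add: V_def)
      finally show "(cmat M *v V) $ j = (mu *s V) $ j" by simp
    qed
    moreover have "V \<noteq> 0"
    proof
      assume "V = 0"
      have "v $ i = 0" if "i < d" for i
      proof -
        have "V $ e i = 0" using \<open>V = 0\<close> by simp
        moreover have "V $ e i = v $ i" by (simp add: V_def ei1 that)
        ultimately show ?thesis by simp
      qed
      then have "v = 0\<^sub>v d" using v(1) by (intro eq_vecI) auto
      with v(2) show False by simp
    qed
    ultimately show ?thesis using sch unfolding schur_def by blast
  qed
  define sr where "sr = spectral_radius CM"
  have sr_mem: "sr \<in> norm ` spectrum CM" unfolding sr_def by (rule spectral_radius_mem_max(1)[OF CM_c dpos])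
  then have sr1: "sr < 1" and sr0: "0 \<le> sr" using L_eig unfolding spectrum_def by auto
  define s where "s = 2 / (1 + sr)"
  have s1: "s > 1" and ssr: "s * sr < 1" using sr1 sr0 unfolding s_def by (auto simp: field_simps)
  have sCM_c: "s \<cdot>\<^sub>m CM \<in> carrier_mat d d" using CM_c by simp
  have "spectral_radius (complex_of_real s \<cdot>\<^sub>m CM) < 1"
  proof -
    have "spectral_radius (complex_of_real s \<cdot>\<^sub>m CM) \<in> norm ` spectrum (complex_of_real s \<cdot>\<^sub>m CM)"
      by (rule spectral_radius_mem_max(1)) (use CM_c dpos in auto)
    then obtain mu where mu: "eigenvalue (complex_of_real s \<cdot>\<^sub>m CM) mu"
       and eqm: "spectral_radius (complex_of_real s \<cdot>\<^sub>m CM) = cmod mu"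
      unfolding spectrum_def by auto
    from mu obtain v where v: "v \<in> carrier_vec d" "v \<noteq> 0\<^sub>v d" "(complex_of_real s \<cdot>\<^sub>m CM) *\<^sub>v v = mu \<cdot>\<^sub>v v"
      unfolding eigenvalue_def eigenvector_def using CM_c by auto
    have "CM *\<^sub>v v = (mu / complex_of_real s) \<cdot>\<^sub>v v"
    proof (rule eq_vecI)
      fix i assume "i < dim_vec ((mu / complex_of_real s) \<cdot>\<^sub>v v)"
      then have i: "i < d" using v(1) by simp
      have "complex_of_real s * (CM *\<^sub>v v) $ i = ((complex_of_real s \<cdot>\<^sub>m CM) *\<^sub>v v) $ i"
        using i CM_c v(1) by (simp add: scalar_prod_def sum_distrib_left algebra_simps)
      also have "\<dots> = mu * v $ i" using v(3) i v(1) by simp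
      finally show "(CM *\<^sub>v v) $ i = ((mu / complex_of_real s) \<cdot>\<^sub>v v) $ i"
        using i v(1) s1 by (simp add: field_simps)
    qed (use CM_c v(1) in simp)
    then have "eigenvalue CM (mu / complex_of_real s)"
      unfolding eigenvalue_def eigenvector_def using v CM_c by auto
    then have "cmod (mu / complex_of_real s) \<le> sr"
      unfolding sr_def by (intro spectral_radius_mem_max(2)[OF CM_c dpos]) (auto simp: spectrum_def)
    then have "cmod mu \<le> s * sr" using s1 by (simp add: norm_divide field_simps)
    then show ?thesis using eqm ssr by simp
  qed
  from spectral_radius_jnf_norm_bound_less_1_upper_triangular[OF _ this] sCM_c
  obtain c where c: "\<And>k. norm_bound ((complex_of_real s \<cdot>\<^sub>m CM) ^\<^sub>m k) c" by auto
  have pow_s: "(complex_of_real s \<cdot>\<^sub>m CM) ^\<^sub>m k = (complex_of_real s ^ k) \<cdot>\<^sub>m (CM ^\<^sub>m k)" for k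
  proof (induction k)
    case 0 then show ?case using CM_c by (auto intro!: eq_matI)
  next
    case (Suc k)
    show ?case using Suc CM_c
      by (simp add: mult_smult_distrib[of _ d d] mult_smult_assoc_mat[of _ d d]) (rule eq_matI, auto)
  qed
  have entry: "cmod ((CM ^\<^sub>m k) $$ (i, j)) \<le> c / s ^ k" if "i < d" "j < d" for i j k
  proof -
    have "cmod (((complex_of_real s \<cdot>\<^sub>m CM) ^\<^sub>m k) $$ (i, j)) \<le> c"
      using c[of k] that CM_c unfolding norm_bound_def by auto
    then have "s ^ k * cmod ((CM ^\<^sub>m k) $$ (i, j)) \<le> c"
      using that CM_c s1 by (simp add: pow_s norm_mult norm_power)
    then show ?thesis using s1 by (simp add: field_simps)
  qed
  define Y where "Y = (\<Sum>j\<in>{0..<d}. \<bar>y $ e j\<bar>)"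
  have comp: "\<bar>(mpow M k *v y) $ e i\<bar> \<le> (c / s ^ k) * Y" if i: "i < d" for i k
  proof -
    have "complex_of_real ((mpow M k *v y) $ e i) = cv (mpow M k *v y) $ i" using i by (simp add: cv_def)
    also have "\<dots> = (CM ^\<^sub>m k *\<^sub>v cv y) $ i" by (simp add: L_pow)
    also have "\<dots> = (\<Sum>j\<in>{0..<d}. (CM ^\<^sub>m k) $$ (i, j) * complex_of_real (y $ e j))"
      using i CM_c by (simp add: scalar_prod_def cv_def)
    finally have eq: "complex_of_real ((mpow M k *v y) $ e i) = (\<Sum>j\<in>{0..<d}. (CM ^\<^sub>m k) $$ (i, j) * complex_of_real (y $ e j))" .
    have "\<bar>(mpow M k *v y) $ e i\<bar> = cmod (complex_of_real ((mpow M k *v y) $ e i))" by simp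
    also have "\<dots> \<le> (\<Sum>j\<in>{0..<d}. cmod ((CM ^\<^sub>m k) $$ (i, j) * complex_of_real (y $ e j)))"
      unfolding eq by (rule norm_sum)
    also have "\<dots> \<le> (\<Sum>j\<in>{0..<d}. (c / s ^ k) * \<bar>y $ e j\<bar>)"
    proof (intro sum_mono)
      fix j assume "j \<in> {0..<d}"
      then have "cmod ((CM ^\<^sub>m k) $$ (i, j)) * \<bar>y $ e j\<bar> \<le> (c / s ^ k) * \<bar>y $ e j\<bar>"
        using entry[OF i, of j k] by (intro mult_right_mono) auto
      then show "cmod ((CM ^\<^sub>m k) $$ (i, j) * complex_of_real (y $ e j)) \<le> (c / s ^ k) * \<bar>y $ e j\<bar>"
        by (simp add: norm_mult)
    qed
    finally show ?thesis by (simp add: Y_def sum_distrib_left)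
  qed
  have bound: "norm (mpow M k *v y) \<le> real d * Y * c * (1 / s) ^ k" for k
  proof -
    have "norm (mpow M k *v y) \<le> (\<Sum>l\<in>UNIV. \<bar>(mpow M k *v y) $ l\<bar>)"
      by (rule norm_le_l1_cart)
    also have "\<dots> = (\<Sum>i\<in>{0..<d}. \<bar>(mpow M k *v y) $ e i\<bar>)"
      by (simp add: sum_e[of "\<lambda>l. \<bar>(mpow M k *v y) $ l\<bar>"])
    also have "\<dots> \<le> (\<Sum>i\<in>{0..<d}. (c / s ^ k) * Y)"
      by (intro sum_mono comp) simp
    finally show ?thesis by (simp add: power_one_over field_simps)
  qed
  have "(\<lambda>k. real d * Y * c * (1 / s) ^ k) \<longlonglongrightarrow> 0"
    using s1 by (intro tendsto_mult_right_zero LIMSEQ_power_zero) simp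
  then show ?thesis
    by (rule Lim_null_comparison[rotated]) (use bound in simp)
qed


context mpc begin

lemma qfQ_nn: "0 \<le> qf Q y" using Q_psd unfolding psd_mat_def qf_def by auto
lemma qfR_nn: "0 \<le> qf R y" using R_psd unfolding psd_mat_def qf_def by auto

lemma P_tendsto: "(\<lambda>n. mpow AK n *v y) \<longlonglongrightarrow> 0"
  by (rule schur_pow_tendsto[OF schur_AK])

lemma qf_tendsto: assumes "f \<longlonglongrightarrow> 0" shows "(\<lambda>n. qf S (f n)) \<longlonglongrightarrow> 0"
proof -
  have "(\<lambda>n. S *v f n) \<longlonglongrightarrow> S *v 0"
    by (rule bounded_linear.tendsto[OF matrix_vector_mul_bounded_linear assms])
  from tendsto_inner[OF assms this] show ?thesis unfolding qf_def by simp
qed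

lemma qfPf_nn: "0 \<le> qf Pf y"
proof -
  have "qf Pf (mpow AK n *v y) \<le> qf Pf y" for n
  proof -
    have "0 \<le> (\<Sum>i<n. qf Q (mpow AK i *v y) + qf R (K *v (mpow AK i *v y)))"
      by (intro sum_nonneg add_nonneg_nonneg qfQ_nn qfR_nn)
    then show ?thesis using quad_tel[where m=n and w=y] by linarith
  qed
  then show ?thesis
    by (intro LIMSEQ_le_const2[OF qf_tendsto[OF P_tendsto]]) auto
qed

lemma lin_decr: "pf \<bullet> (AK *v y) = pf \<bullet> y - (y \<bullet> q + (K *v y) \<bullet> r)"
proof -
  have a: "Vf (AK *v y) = Vf y - ell y (K *v y)" by (rule Vf_decr)
  have b: "Vf (AK *v (-y)) = Vf (-y) - ell (-y) (K *v (-y))" by (rule Vf_decr)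
  show ?thesis using a b
    by (simp add: term_cost_def stage_cost_def mvneg)
qed

lemma lin_tel: "pf \<bullet> y = (\<Sum>i<n. (mpow AK i *v y) \<bullet> q + (K *v (mpow AK i *v y)) \<bullet> r) + pf \<bullet> (mpow AK n *v y)"
proof (induction n)
  case 0 then show ?case by simp
next
  case (Suc n)
  show ?case using Suc lin_decr[of "mpow AK n *v y"] by (simp add: mpow_vec_Suc del: mpow.simps)
qed

context
  fixes c0 :: real
  assumes lb: "\<And>y v. c0 \<le> ell y v"
begin

lemma q_zero: assumes "qf Q y = 0" shows "y \<bullet> q = 0"
proof (rule ccontr)
  assume ne: "y \<bullet> q \<noteq> 0"
  define t where "t = (c0 - 1) / (y \<bullet> q)"
  have "ell (t *\<^sub>R y) 0 = t * t * qf Q y + t * (y \<bullet> q)"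
    by (simp add: stage_cost_def qf_def matrix_vector_mult_scaleR)
  also have "\<dots> = c0 - 1" using assms ne by (simp add: t_def)
  finally show False using lb[of "t *\<^sub>R y" 0] by simp
qed

lemma r_zero: assumes "qf R u = 0" shows "u \<bullet> r = 0"
proof (rule ccontr)
  assume ne: "u \<bullet> r \<noteq> 0"
  define t where "t = (c0 - 1) / (u \<bullet> r)"
  have "ell 0 (t *\<^sub>R u) = t * t * qf R u + t * (u \<bullet> r)"
    by (simp add: stage_cost_def qf_def matrix_vector_mult_scaleR)
  also have "\<dots> = c0 - 1" using assms ne by (simp add: t_def)
  finally show False using lb[of 0 "t *\<^sub>R u"] by simp
qed

lemma pf_zero: assumes z: "qf Pf z = 0" shows "pf \<bullet> z = 0"
proof -
  have G0: "qf Q (mpow AK i *v z) = 0 \<and> qf R (K *v (mpow AK i *v z)) = 0" for i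
  proof -
    have e: "(\<Sum>j<Suc i. qf Q (mpow AK j *v z) + qf R (K *v (mpow AK j *v z))) + qf Pf (mpow AK (Suc i) *v z) = 0"
      using quad_tel[where m="Suc i" and w=z] z by simp
    have nn: "0 \<le> (\<Sum>j<Suc i. qf Q (mpow AK j *v z) + qf R (K *v (mpow AK j *v z)))"
      by (intro sum_nonneg add_nonneg_nonneg qfQ_nn qfR_nn)
    have "(\<Sum>j<Suc i. qf Q (mpow AK j *v z) + qf R (K *v (mpow AK j *v z))) = 0"
      using e nn qfPf_nn[of "mpow AK (Suc i) *v z"] by linarith
    then have "\<forall>j\<in>{..<Suc i}. qf Q (mpow AK j *v z) + qf R (K *v (mpow AK j *v z)) = 0"
      by (subst (asm) sum_nonneg_eq_0_iff) (auto intro!: add_nonneg_nonneg qfQ_nn qfR_nn)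
    then have "qf Q (mpow AK i *v z) + qf R (K *v (mpow AK i *v z)) = 0" by simp
    then show ?thesis using qfQ_nn[of "mpow AK i *v z"] qfR_nn[of "K *v (mpow AK i *v z)"] by linarith
  qed
  have "pf \<bullet> z = pf \<bullet> (mpow AK n *v z)" for n
    using lin_tel[of z n] G0 q_zero r_zero by simp
  then have "(\<lambda>n. pf \<bullet> (mpow AK n *v z)) \<longlonglongrightarrow> pf \<bullet> z" by simp
  moreover have "(\<lambda>n. pf \<bullet> (mpow AK n *v z)) \<longlonglongrightarrow> pf \<bullet> 0"
    by (intro tendsto_inner tendsto_const P_tendsto)
  ultimately show ?thesis using LIMSEQ_unique by fastforce
qed

lemma qf_expand2: "qf S (x + t *\<^sub>R z) = qf S x + t * (x \<bullet> (S *v z) + z \<bullet> (S *v x)) + t * t * qf S z"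
  by (simp add: qf_def matrix_vector_right_distrib matrix_vector_mult_scaleR inner_add_left inner_add_right algebra_simps)

lemma cross_zero: assumes z: "qf Pf z = 0" shows "x \<bullet> (Pf *v z) + z \<bullet> (Pf *v x) = 0"
proof (rule ccontr)
  let ?c = "x \<bullet> (Pf *v z) + z \<bullet> (Pf *v x)"
  assume ne: "?c \<noteq> 0"
  define t where "t = - (qf Pf x + 1) / ?c"
  have "qf Pf (x + t *\<^sub>R z) = qf Pf x + t * ?c" using z by (simp add: qf_expand2)
  also have "\<dots> = -1" using ne by (simp add: t_def)
  finally show False using qfPf_nn[of "x + t *\<^sub>R z"] by simp
qed

lemma qf_add_null: assumes z: "qf Pf z = 0" shows "qf Pf (x + z) = qf Pf x"
  using qf_expand2[of Pf x 1 z] cross_zero[OF z, of x] z by simp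

lemma qf_continuous: "continuous_on T (qf S)"
proof -
  have "continuous_on T (\<lambda>x. x \<bullet> (S *v x))"
    by (intro continuous_on_inner continuous_on_id bounded_linear.continuous_on[OF matrix_vector_mul_bounded_linear])
  then show ?thesis unfolding qf_def[abs_def] .
qed

lemma Vf_lb: "\<exists>Vmin. \<forall>y. Vmin \<le> Vf y"
proof -
  define W where "W = {z. qf Pf z = 0}"
  have subW: "Real_Vector_Spaces.subspace W"
  proof (rule real_vector.subspaceI)
    show "0 \<in> W" by (simp add: W_def qf_def)
  next
    fix x y assume "x \<in> W" "y \<in> W"
    then show "x + y \<in> W" using qf_add_null[of y x] by (simp add: W_def)
  next
    fix c :: real and x assume "x \<in> W"
    then show "c *\<^sub>R x \<in> W" by (simp add: W_def qf_def matrix_vector_mult_scaleR)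
  qed
  then have spanW: "Real_Vector_Spaces.span W = W" by (simp add: real_vector.span_eq_iff)
  have Vf_W: "Vf (y + z) = qf Pf z + pf \<bullet> z" if "y \<in> W" for y z
  proof -
    have "qf Pf (z + y) = qf Pf z" using that by (intro qf_add_null) (simp add: W_def)
    moreover have "pf \<bullet> y = 0" using that pf_zero by (simp add: W_def)
    ultimately show ?thesis by (simp add: term_cost_def qf_def[symmetric] add.commute inner_add_right)
  qed
  define S where "S = {u. norm u = 1 \<and> (\<forall>w\<in>W. u \<bullet> w = 0)}"
  have S_eq: "S = sphere 0 1 \<inter> (\<Inter>w\<in>W. {u. w \<bullet> u = 0})"
    by (auto simp: S_def inner_commute)
  have compS: "compact S" unfolding S_eq
    by (intro compact_Int_closed compact_sphere closed_INT closed_hyperplane ballI)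
  have dec: "\<exists>y z. y \<in> W \<and> (\<forall>w\<in>W. z \<bullet> w = 0) \<and> x = y + z" for x
  proof -
    obtain y z where "y \<in> Real_Vector_Spaces.span W" "\<And>w. w \<in> Real_Vector_Spaces.span W \<Longrightarrow> Linear_Algebra.orthogonal z w" "x = y + z"
      using orthogonal_subspace_decomp_exists[of W x] by blast
    then show ?thesis unfolding spanW Linear_Algebra.orthogonal_def by blast
  qed
  have zS: "z /\<^sub>R norm z \<in> S" if "z \<noteq> 0" "\<forall>w\<in>W. z \<bullet> w = 0" for z
    using that by (simp add: S_def)
  show ?thesis
  proof (cases "S = {}")
    case True
    have "0 \<le> Vf x" for x
    proof -
      obtain y z where yz: "y \<in> W" "\<forall>w\<in>W. z \<bullet> w = 0" "x = y + z" using dec by blast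
      have "z = 0" using zS[of z] yz(2) True by auto
      then show ?thesis using Vf_W[OF yz(1), of 0] yz(3) by (simp add: qf_def)
    qed
    then show ?thesis by blast
  next
    case False
    obtain u0 where u0: "u0 \<in> S" "\<And>u. u \<in> S \<Longrightarrow> qf Pf u0 \<le> qf Pf u"
      using continuous_attains_inf[OF compS False qf_continuous] by blast
    define m where "m = qf Pf u0"
    have mpos: "m > 0"
    proof -
      have "m \<ge> 0" unfolding m_def by (rule qfPf_nn)
      moreover have "m \<noteq> 0"
      proof
        assume "m = 0"
        then have "u0 \<in> W" by (simp add: W_def m_def)
        then have "u0 \<bullet> u0 = 0" using u0(1) by (simp add: S_def)
        then show False using u0(1) by (simp add: S_def)
      qed
      ultimately show ?thesis by simp
    qed
    have "- (norm pf)\<^sup>2 / (4 * m) \<le> Vf x" for x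
    proof -
      obtain y z where yz: "y \<in> W" "\<forall>w\<in>W. z \<bullet> w = 0" "x = y + z" using dec by blast
      define t where "t = norm z"
      have qz: "m * t\<^sup>2 \<le> qf Pf z"
      proof (cases "z = 0")
        case True then show ?thesis by (simp add: t_def qf_def)
      next
        case False
        have "m \<le> qf Pf (z /\<^sub>R norm z)" unfolding m_def by (rule u0(2)[OF zS[OF False yz(2)]])
        also have "qf Pf (z /\<^sub>R norm z) = qf Pf z / (norm z)\<^sup>2"
          by (simp add: qf_def matrix_vector_mult_scaleR power2_eq_square field_simps)
        finally show ?thesis using False by (simp add: t_def field_simps)
      qed
      have pz: "- (norm pf * t) \<le> pf \<bullet> z"
        using norm_cauchy_schwarz[of "-pf" z] by (simp add: t_def)
      have sq: "- (norm pf)\<^sup>2 / (4 * m) \<le> m * t\<^sup>2 - norm pf * t"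
      proof -
        have "0 \<le> (2 * m * t - norm pf)\<^sup>2" by simp
        then have "- (norm pf)\<^sup>2 \<le> 4 * m * (m * t\<^sup>2 - norm pf * t)"
          by (simp add: power2_eq_square algebra_simps)
        then show ?thesis using mpos by (simp add: field_simps)
      qed
      have "Vf x = qf Pf z + pf \<bullet> z" using Vf_W[OF yz(1)] yz(3) by simp
      then show ?thesis using qz pz sq by linarith
    qed
    then show ?thesis by blast
  qed
qed

end
end


context mpc begin

lemma qf_comp: "qf S (M *v w) = qf (transpose M ** S ** M) w"
proof -
  have "qf (transpose M ** S ** M) w = w \<bullet> (transpose M *v (S *v (M *v w)))"
    by (simp add: qf_def matrix_vector_mul_assoc matrix_mul_assoc)
  also have "\<dots> = (M *v w) \<bullet> (S *v (M *v w))"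
    by (metis dot_lmul_matrix inner_commute transpose_matrix_vector)
  finally show ?thesis by (simp add: qf_def)
qed

lemma D_int_qf_comp: "integrable D (\<lambda>w. qf S (M *v w))"
  unfolding qf_comp using D_int_qf(1) by simp

lemma D_int_Mlin: "integrable D (\<lambda>w. (M *v w) \<bullet> c)"
proof -
  have "(\<lambda>w. (M *v w) \<bullet> c) = (\<lambda>w. (c v* M) \<bullet> w)"
    by (metis dot_lmul_matrix inner_commute)
  then show ?thesis using D_int_lin(1) by simp
qed

definition Phi :: "real^'n \<Rightarrow> real" where
  "Phi w = (\<Sum>i<N - 1. 2 * (qf Q (mpow AK i *v w) + qf R (K *v (mpow AK i *v w)))
              + (mpow AK i *v w) \<bullet> q + (K *v (mpow AK i *v w)) \<bullet> r)
           + 2 * qf Pf (mpow AK (N - 1) *v w) + (mpow AK (N - 1) *v w) \<bullet> pf"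

lemma D_int_Phi: "integrable D Phi"
proof -
  have e: "Phi = (\<lambda>w. (\<Sum>i<N - 1. 2 * (qf Q (mpow AK i *v w) + qf R ((K ** mpow AK i) *v w))
              + (mpow AK i *v w) \<bullet> q + ((K ** mpow AK i) *v w) \<bullet> r)
           + 2 * qf Pf (mpow AK (N - 1) *v w) + (mpow AK (N - 1) *v w) \<bullet> pf)"
    by (simp add: Phi_def[abs_def] matrix_vector_mul_assoc)
  show ?thesis unfolding e
    by (intro Bochner_Integration.integrable_add Bochner_Integration.integrable_sum
        Bochner_Integration.integrable_mult_right D_int_qf_comp D_int_Mlin)
qed

lemma qf_add_le: assumes nn: "\<And>z. 0 \<le> qf S z" shows "qf S (x + y) \<le> 2 * qf S x + 2 * qf S y"
proof -
  have "qf S (x + y) + qf S (x - y) = 2 * qf S x + 2 * qf S y"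
    by (simp add: qf_def matrix_vector_right_distrib matrix_vector_mult_diff_distrib
        inner_add_left inner_add_right inner_diff_left inner_diff_right algebra_simps)
  then show ?thesis using nn[of "x - y"] by linarith
qed

context
  fixes c0 :: real and Vm :: real
  assumes lb: "\<And>y v. c0 \<le> ell y v"
    and vlb: "\<And>y. Vm \<le> Vf y"
begin

lemma half_ell: "qf Q y + qf R u \<le> 2 * ell y u - 4 * c0"
proof -
  have "ell ((1/2) *\<^sub>R y) ((1/2) *\<^sub>R u) = (1/4) * qf Q y + (1/4) * qf R u + (1/2) * (y \<bullet> q) + (1/2) * (u \<bullet> r)"
    by (simp add: stage_cost_def qf_def matrix_vector_mult_scaleR algebra_simps)
  moreover have "ell y u = qf Q y + qf R u + y \<bullet> q + u \<bullet> r"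
    by (simp add: stage_cost_def qf_def)
  ultimately show ?thesis using lb[of "(1/2) *\<^sub>R y" "(1/2) *\<^sub>R u"] by linarith
qed

lemma half_Vf: "qf Pf y \<le> 2 * Vf y - 4 * Vm"
proof -
  have "Vf ((1/2) *\<^sub>R y) = (1/4) * qf Pf y + (1/2) * (pf \<bullet> y)"
    by (simp add: term_cost_def qf_def matrix_vector_mult_scaleR algebra_simps)
  moreover have "Vf y = qf Pf y + pf \<bullet> y"
    by (simp add: term_cost_def qf_def)
  ultimately show ?thesis using vlb[of "(1/2) *\<^sub>R y"] by linarith
qed

lemma ell_shift_bound:
  "ell (y + a) (u + b) \<le> 3 * ell y u - 4 * c0 + (2 * (qf Q a + qf R b) + a \<bullet> q + b \<bullet> r)"
proof -
  have e1: "ell (y + a) (u + b) = qf Q (y + a) + qf R (u + b) + (y \<bullet> q + u \<bullet> r) + (a \<bullet> q + b \<bullet> r)"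
    by (simp add: stage_cost_def qf_def inner_add_left)
  have e2: "ell y u = (qf Q y + qf R u) + (y \<bullet> q + u \<bullet> r)"
    by (simp add: stage_cost_def qf_def)
  have "qf Q (y + a) \<le> 2 * qf Q y + 2 * qf Q a" by (rule qf_add_le[OF qfQ_nn])
  moreover have "qf R (u + b) \<le> 2 * qf R u + 2 * qf R b" by (rule qf_add_le[OF qfR_nn])
  ultimately show ?thesis using e1 e2 half_ell[of y u] by (smt (verit))
qed

lemma Vf_shift_bound:
  "Vf (y + a) \<le> 3 * Vf y - 4 * Vm + (2 * qf Pf a + a \<bullet> pf)"
proof -
  have e1: "Vf (y + a) = qf Pf (y + a) + pf \<bullet> y + a \<bullet> pf"
    by (simp add: term_cost_def qf_def inner_add_right inner_commute)
  have e2: "Vf y = qf Pf y + pf \<bullet> y"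
    by (simp add: term_cost_def qf_def)
  have "qf Pf (y + a) \<le> 2 * qf Pf y + 2 * qf Pf a" by (rule qf_add_le[OF qfPf_nn])
  then show ?thesis using e1 e2 half_Vf[of y] by (smt (verit))
qed

lemma cost_lb: "real N * c0 + Vm + covs \<le> cost x (z, v, lam)"
proof -
  have "(\<Sum>i<N. c0) \<le> (\<Sum>i<N. ell (ms x z v i) (mi x z v i))"
    by (intro sum_mono lb)
  then show ?thesis unfolding cost_eq using vlb[of "ms x z v N"] by simp
qed

lemma cost_lb2: "ell x (mi x z v 0) + real (N - 1) * c0 + Vm + covs \<le> cost x (z, v, lam)"
proof -
  obtain m where m: "N = Suc m" using N_pos by (cases N) auto
  have "(\<Sum>i<m. c0) \<le> (\<Sum>i<m. ell (ms x z v (Suc i)) (mi x z v (Suc i)))"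
    by (intro sum_mono lb)
  then show ?thesis unfolding cost_orig[OF m] using vlb[of "ms x z v N"] m by simp
qed

lemma J_lb: "real N * c0 + Vm + covs \<le> J k (fst (cl om k)) (snd (cl om k))"
proof -
  obtain z v lam where d: "sol k (fst (cl om k)) (snd (cl om k)) = (z, v, lam)"
    by (cases "sol k (fst (cl om k)) (snd (cl om k))") auto
  show ?thesis using opt_val_min[OF min_cl[of k om]] d cost_lb by simp
qed

lemma ell_ub: "ell (fst (cl om k)) (cl_input K sol k (cl om k))
   \<le> J k (fst (cl om k)) (snd (cl om k)) - real (N - 1) * c0 - Vm - covs"
proof -
  obtain z v lam where d: "sol k (fst (cl om k)) (snd (cl om k)) = (z, v, lam)"
    by (cases "sol k (fst (cl om k)) (snd (cl om k))") auto
  have u: "cl_input K sol k (cl om k) = mi (fst (cl om k)) z v 0" by (simp add: cl_input_def d mean_input_def)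
  show ?thesis using opt_val_min[OF min_cl[of k om]] d cost_lb2[of "fst (cl om k)" z v lam] u by simp
qed

lemma step_bound2:
  "J (Suc k) (fst (cl (om(k := w)) (Suc k))) (snd (cl (om(k := w)) (Suc k)))
      \<le> 3 * J k (fst (cl om k)) (snd (cl om k)) + Phi w
         + (- 3 * c0 - 2 * covs - 4 * c0 * real (N - 1) - 4 * Vm)"
proof -
  obtain m where m: "N = Suc m" using N_pos by (cases N) auto
  let ?s = "cl om k"
  let ?x = "fst ?s"
  obtain z v lam where d: "sol k (fst ?s) (snd ?s) = (z, v, lam)" by (cases "sol k (fst ?s) (snd ?s)") auto
  have mn: "is_minimizer N A B K Q q R r Pf pf Sw Zb Xf k ?x (snd ?s) (z, v, lam)"
    using min_cl[of k om] d by simp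
  then have fd: "feas k ?x (snd ?s) (z, v, lam)" unfolding is_minimizer_def by simp
  have Jk: "J k ?x (snd ?s) = cost ?x (z, v, lam)" by (rule opt_val_min[OF mn])
  have clS: "cl (om(k := w)) (Suc k) = (ms ?x z v 1 + w, z 1)"
    using cl_upd[of om k w] d
    by (simp add: Let_def cl_input_def ms_Suc mean_input_def)
  have f2: "feas (Suc k) (ms ?x z v 1 + w) (z 1) (shd (z, v, lam))"
    by (rule feas_shift[OF fd])
  have mn2: "is_minimizer N A B K Q q R r Pf pf Sw Zb Xf (Suc k) (ms ?x z v 1 + w) (z 1)
        (sol (Suc k) (ms ?x z v 1 + w) (z 1))"
    using sol_min f2 by blast
  have J1: "J (Suc k) (fst (cl (om(k := w)) (Suc k))) (snd (cl (om(k := w)) (Suc k)))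
        \<le> cost (ms ?x z v 1 + w) (shd (z, v, lam))"
    unfolding clS using opt_val_le[OF mn2 f2] by simp
  let ?xs = "ms ?x z v" and ?us = "mi ?x z v" and ?P = "\<lambda>i. mpow AK i *v w"
  have s1: "(\<Sum>i<m. ell (?xs (Suc i) + ?P i) (?us (Suc i) + K *v ?P i))
     \<le> (\<Sum>i<m. 3 * ell (?xs (Suc i)) (?us (Suc i)) - 4 * c0
           + (2 * (qf Q (?P i) + qf R (K *v ?P i)) + ?P i \<bullet> q + (K *v ?P i) \<bullet> r))"
    by (intro sum_mono ell_shift_bound)
  have s2: "Vf (?xs N + ?P m) \<le> 3 * Vf (?xs N) - 4 * Vm + (2 * qf Pf (?P m) + ?P m \<bullet> pf)"
    by (rule Vf_shift_bound)
  have ph: "Phi w = (\<Sum>i<m. 2 * (qf Q (?P i) + qf R (K *v ?P i)) + ?P i \<bullet> q + (K *v ?P i) \<bullet> r)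
           + (2 * qf Pf (?P m) + ?P m \<bullet> pf)"
    unfolding Phi_def using m by simp
  have s3: "(\<Sum>i<m. 3 * ell (?xs (Suc i)) (?us (Suc i)) - 4 * c0
           + (2 * (qf Q (?P i) + qf R (K *v ?P i)) + ?P i \<bullet> q + (K *v ?P i) \<bullet> r))
      = 3 * (\<Sum>i<m. ell (?xs (Suc i)) (?us (Suc i))) - 4 * c0 * real m
        + (\<Sum>i<m. 2 * (qf Q (?P i) + qf R (K *v ?P i)) + ?P i \<bullet> q + (K *v ?P i) \<bullet> r)"
    by (simp add: sum.distrib sum_subtractf sum_distrib_left)
  have co: "cost ?x (z, v, lam) = ell ?x (?us 0) + (\<Sum>i<m. ell (?xs (Suc i)) (?us (Suc i))) + Vf (?xs N) + covs"
    by (rule cost_orig[OF m])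
  have l0: "c0 \<le> ell ?x (?us 0)" by (rule lb)
  have cs: "cost (?xs 1 + w) (shd (z, v, lam)) =
     (\<Sum>i<m. ell (?xs (Suc i) + ?P i) (?us (Suc i) + K *v ?P i)) + Vf (?xs N + ?P m) + covs"
    by (rule cost_shift[OF m])
  have "N - 1 = m" using m by simp
  then show ?thesis using J1 cs s1 s2 s3 ph co l0 Jk by (smt (verit))
qed

end
end


lemma mv_meas[measurable (raw)]:
  fixes Mx :: "real^'a^'b"
  shows "f \<in> borel_measurable M \<Longrightarrow> (\<lambda>x. Mx *v f x) \<in> borel_measurable M"
  by (rule borel_measurable_continuous_on[OF bounded_linear.continuous_on[OF matrix_vector_mul_bounded_linear continuous_on_id]])

lemma fst_meas[measurable]: "(\<lambda>p::('a::topological_space \<times> 'b::topological_space). fst p) \<in> borel_measurable borel"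
  by (rule borel_measurable_continuous_onI) (intro continuous_on_fst continuous_on_id)

lemma snd_meas[measurable]: "(\<lambda>p::('a::topological_space \<times> 'b::topological_space). snd p) \<in> borel_measurable borel"
  by (rule borel_measurable_continuous_onI) (intro continuous_on_snd continuous_on_id)

context mpc begin

abbreviation "Mo \<equiv> PiM UNIV (\<lambda>_::nat. D)"

definition Zs :: "nat \<Rightarrow> (real^'n) \<times> (real^'n) \<Rightarrow> nat \<Rightarrow> real^'n" where
  "Zs k p = fst (sol k (fst p) (snd p))"
definition Vs :: "nat \<Rightarrow> (real^'n) \<times> (real^'n) \<Rightarrow> nat \<Rightarrow> real^'m" where
  "Vs k p = fst (snd (sol k (fst p) (snd p)))"

lemma Zs_meas[measurable]: "(\<lambda>p. Zs k p i) \<in> borel_measurable borel"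
  using sol_meas[of k i] unfolding Zs_def by blast
lemma Vs_meas[measurable]: "(\<lambda>p. Vs k p i) \<in> borel_measurable borel"
  using sol_meas[of k i] unfolding Vs_def by blast

lemma ell_meas[measurable (raw)]:
  assumes [measurable]: "f \<in> borel_measurable M'" "g \<in> borel_measurable M'"
  shows "(\<lambda>x. ell (f x) (g x)) \<in> borel_measurable M'"
  unfolding stage_cost_def by measurable

lemma Vf_meas[measurable (raw)]:
  assumes [measurable]: "f \<in> borel_measurable M'"
  shows "(\<lambda>x. Vf (f x)) \<in> borel_measurable M'"
  unfolding term_cost_def by measurable

lemma ms_meas[measurable]: "(\<lambda>p. ms (fst p) (Zs k p) (Vs k p) i) \<in> borel_measurable borel"
proof (induction i)
  case 0 then show ?case by (simp add: fst_meas)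
next
  case (Suc i)
  note Suc[measurable]
  show ?case unfolding ms_Suc by measurable
qed

lemma mi_meas[measurable]: "(\<lambda>p. mi (fst p) (Zs k p) (Vs k p) i) \<in> borel_measurable borel"
  unfolding mean_input_def by measurable

lemma cost_sol: "cost (fst p) (sol k (fst p) (snd p)) =
   (\<Sum>i<N. ell (ms (fst p) (Zs k p) (Vs k p) i) (mi (fst p) (Zs k p) (Vs k p) i))
   + Vf (ms (fst p) (Zs k p) (Vs k p) N) + covs"
proof -
  obtain lam where "sol k (fst p) (snd p) = (Zs k p, Vs k p, lam)"
    unfolding Zs_def Vs_def by (metis prod.collapse)
  then show ?thesis by (simp only: cost_eq)
qed

lemma cost_sol_meas: "(\<lambda>p. cost (fst p) (sol k (fst p) (snd p))) \<in> borel_measurable borel"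
  unfolding cost_sol by measurable

lemma cl_input_alt: "cl_input K sol k p = Vs k p 0 + K *v (fst p - Zs k p 0)"
  by (simp add: cl_input_def Zs_def Vs_def split: prod.splits)

lemma cl_input_meas[measurable]: "(\<lambda>p. cl_input K sol k p) \<in> borel_measurable borel"
  unfolding cl_input_alt by measurable

lemma comp_meas[measurable]: "(\<lambda>om. om j) \<in> borel_measurable Mo"
proof -
  have "(\<lambda>om. om j) \<in> measurable Mo D" by simp
  moreover have "measurable Mo D = borel_measurable Mo" by (rule measurable_cong_sets[OF refl D_sets])
  ultimately show ?thesis by simp
qed

lemma cl_meas: "(\<lambda>om. cl om k) \<in> borel_measurable Mo"
proof (induction k)
  case 0 then show ?case by simp
next
  case (Suc k)
  have F: "(\<lambda>p. A *v fst p + B *v cl_input K sol k p) \<in> borel_measurable borel"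
    by measurable
  have G: "(\<lambda>p. Zs k p 1) \<in> borel_measurable borel" by simp
  have e: "cl om (Suc k) = (A *v fst (cl om k) + B *v cl_input K sol k (cl om k) + om k, Zs k (cl om k) 1)" for om
    by (simp add: Let_def Zs_def)
  have "(\<lambda>om. (A *v fst (cl om k) + B *v cl_input K sol k (cl om k) + om k, Zs k (cl om k) 1)) \<in> borel_measurable Mo"
    using measurable_compose[OF Suc F] measurable_compose[OF Suc G] by measurable
  then show ?case unfolding e .
qed

lemma Cf_eq: "J k (fst (cl om k)) (snd (cl om k)) = cost (fst (cl om k)) (sol k (fst (cl om k)) (snd (cl om k)))"
  by (rule opt_val_min[OF min_cl])

lemma Cf_meas: "(\<lambda>om. J k (fst (cl om k)) (snd (cl om k))) \<in> borel_measurable Mo"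
  unfolding Cf_eq using measurable_compose[OF cl_meas cost_sol_meas] by simp

lemma Lf_meas: "(\<lambda>om. ell (fst (cl om k)) (cl_input K sol k (cl om k))) \<in> borel_measurable Mo"
proof -
  have "(\<lambda>p. ell (fst p) (cl_input K sol k p)) \<in> borel_measurable borel"
    by measurable
  from measurable_compose[OF cl_meas this] show ?thesis by simp
qed

end


context mpc begin

lemma Mo_prob: "prob_space Mo"
  by (rule prob_space_PiM) (use D_prob in simp)

lemma comp_int: fixes f :: "real^'n \<Rightarrow> real" assumes "integrable D f" shows "integrable Mo (\<lambda>om. f (om k))"
proof -
  have d: "distr Mo D (\<lambda>om. om k) = D"
    by (rule distr_PiM_component) (use D_prob in auto)
  have "integrable (distr Mo D (\<lambda>om. om k)) f" unfolding d by fact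
  moreover have m1: "(\<lambda>om. om k) \<in> measurable Mo D" by simp
  ultimately show ?thesis
    using integrable_distr_eq[OF m1 borel_measurable_integrable[OF assms]] by simp
qed

lemma comp_integral: fixes f :: "real^'n \<Rightarrow> real" assumes "integrable D f" shows "(\<integral>om. f (om k) \<partial>Mo) = (\<integral>w. f w \<partial>D)"
proof -
  have d: "distr Mo D (\<lambda>om. om k) = D"
    by (rule distr_PiM_component) (use D_prob in auto)
  have "(\<integral>w. f w \<partial>D) = (\<integral>w. f w \<partial>distr Mo D (\<lambda>om. om k))" unfolding d ..
  also have "\<dots> = (\<integral>om. f (om k) \<partial>Mo)"
    by (rule integral_distr[OF _ borel_measurable_integrable[OF assms]]) (rule measurable_component_singleton, simp)
  finally show ?thesis by simp
qed

context
  fixes c0 :: real and Vm :: real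
  assumes lb: "\<And>y v. c0 \<le> ell y v"
    and vlb: "\<And>y. Vm \<le> Vf y"
begin

abbreviation "Cf k om \<equiv> J k (fst (cl om k)) (snd (cl om k))"
abbreviation "Lf k om \<equiv> ell (fst (cl om k)) (cl_input K sol k (cl om k))"

lemma Cf_int: "integrable Mo (Cf k)"
proof (induction k)
  case 0
  interpret P: prob_space Mo by (rule Mo_prob)
  show ?case by simp
next
  case (Suc k)
  interpret P: prob_space Mo by (rule Mo_prob)
  define Kc where "Kc = - 3 * c0 - 2 * covs - 4 * c0 * real (N - 1) - 4 * Vm"
  define Lb where "Lb = real N * c0 + Vm + covs"
  have up: "Cf (Suc k) om \<le> 3 * Cf k om + Phi (om k) + Kc" for om
    using step_bound2[OF lb vlb, of k om "om k"] by (simp add: Kc_def)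
  have lo: "Lb \<le> Cf (Suc k) om" for om unfolding Lb_def by (rule J_lb[OF lb vlb])
  have fi: "integrable Mo (\<lambda>om. \<bar>Lb\<bar> + \<bar>3 * Cf k om + Phi (om k) + Kc\<bar>)"
    by (intro Bochner_Integration.integrable_add integrable_abs P.integrable_const
        Bochner_Integration.integrable_mult_right Suc comp_int D_int_Phi)
  show ?case
  proof (rule Bochner_Integration.integrable_bound[OF fi Cf_meas])
    show "AE om in Mo. norm (Cf (Suc k) om) \<le> norm (\<bar>Lb\<bar> + \<bar>3 * Cf k om + Phi (om k) + Kc\<bar>)"
    proof (rule AE_I2)
      fix om
      show "norm (Cf (Suc k) om) \<le> norm (\<bar>Lb\<bar> + \<bar>3 * Cf k om + Phi (om k) + Kc\<bar>)"
        using up[of om] lo[of om] by simp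
    qed
  qed
qed

lemma Lf_int: "integrable Mo (Lf k)"
proof -
  interpret P: prob_space Mo by (rule Mo_prob)
  define Kc where "Kc = real (N - 1) * c0 + Vm + covs"
  have up: "Lf k om \<le> Cf k om - Kc" for om using ell_ub[OF lb vlb, of om k] by (simp add: Kc_def)
  have lo: "c0 \<le> Lf k om" for om by (rule lb)
  have fi: "integrable Mo (\<lambda>om. \<bar>c0\<bar> + \<bar>Cf k om - Kc\<bar>)"
    by (intro Bochner_Integration.integrable_add integrable_abs P.integrable_const
        Bochner_Integration.integrable_diff Cf_int)
  show ?thesis
  proof (rule Bochner_Integration.integrable_bound[OF fi Lf_meas])
    show "AE om in Mo. norm (Lf k om) \<le> norm (\<bar>c0\<bar> + \<bar>Cf k om - Kc\<bar>)"
    proof (rule AE_I2)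
      fix om
      show "norm (Lf k om) \<le> norm (\<bar>c0\<bar> + \<bar>Cf k om - Kc\<bar>)"
        using up[of om] lo[of om] by simp
    qed
  qed
qed

end
end


context mpc begin
context
  fixes c0 :: real and Vm :: real
  assumes lb: "\<And>y v. c0 \<le> ell y v"
    and vlb: "\<And>y. Vm \<le> Vf y"
begin

lemma step_exp: "(\<integral>om. Cf (Suc k) om \<partial>Mo) \<le> (\<integral>om. Cf k om \<partial>Mo) - (\<integral>om. Lf k om \<partial>Mo) + trace (Pf ** Sw)"
proof -
  interpret D: prob_space D by (rule D_prob)
  define P where "P = PiM (UNIV - {k}) (\<lambda>_::nat. D)"
  interpret PP: prob_space P unfolding P_def by (rule prob_space_PiM) (use D_prob in simp)
  interpret DP: pair_sigma_finite D P by unfold_locales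
  interpret Mp: prob_space Mo by (rule Mo_prob)
  define T where "T = (\<lambda>p::(real^'n) \<times> (nat \<Rightarrow> real^'n). (snd p)(k := fst p))"
  have T_meas: "T \<in> measurable (D \<Otimes>\<^sub>M P) Mo"
    unfolding T_def P_def by (rule measurable_fun_upd[where J="UNIV - {k}"]) auto
  have distrT: "distr (D \<Otimes>\<^sub>M P) Mo T = Mo"
  proof -
    have "distr (D \<Otimes>\<^sub>M PiM (UNIV - {k}) (\<lambda>_. D)) (PiM (insert k (UNIV - {k})) (\<lambda>_. D)) (\<lambda>(x, X). X(k := x))
        = PiM (insert k (UNIV - {k})) (\<lambda>_. D)"
      by (rule distr_pair_PiM_eq_PiM) (use D_prob in auto)
    moreover have "(\<lambda>(x, X). X(k := x)) = T" by (simp add: T_def fun_eq_iff split_beta)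
    moreover have "insert k (UNIV - {k}) = (UNIV :: nat set)" by auto
    ultimately show ?thesis unfolding P_def by simp
  qed
  have transfer: "(\<integral>om. f om \<partial>Mo) = (\<integral>X. (\<integral>x. f (X(k := x)) \<partial>D) \<partial>P)
      \<and> integrable P (\<lambda>X. \<integral>x. f (X(k := x)) \<partial>D)
      \<and> (AE X in P. integrable D (\<lambda>x. f (X(k := x))))"
    if fi: "integrable Mo f" for f :: "(nat \<Rightarrow> real^'n) \<Rightarrow> real"
  proof -
    have fm: "f \<in> borel_measurable Mo" using fi by simp
    have i1: "integrable (D \<Otimes>\<^sub>M P) (\<lambda>p. f (T p))"
      using integrable_distr_eq[OF T_meas fm] fi distrT by simp
    have e1: "(\<integral>om. f om \<partial>Mo) = (\<integral>p. f (T p) \<partial>(D \<Otimes>\<^sub>M P))"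
      using integral_distr[OF T_meas fm] distrT by simp
    have cp: "(\<lambda>p. f (T p)) = case_prod (\<lambda>x X. f (X(k := x)))"
      by (simp add: T_def fun_eq_iff split_beta)
    have i2: "integrable (D \<Otimes>\<^sub>M P) (case_prod (\<lambda>x X. f (X(k := x))))" using i1 cp by simp
    show ?thesis
      using DP.integral_snd[OF i2] DP.integrable_snd[OF i2] DP.AE_integrable_snd[OF i2] e1 cp by simp
  qed
  define tr where "tr = trace (Pf ** Sw)"
  define f0 where "f0 = (\<lambda>om. Cf k om - Lf k om + tr)"
  have f0i: "integrable Mo f0" unfolding f0_def
    by (intro Bochner_Integration.integrable_add Bochner_Integration.integrable_diff Cf_int[OF lb vlb] Lf_int[OF lb vlb] Mp.integrable_const)
  have f1i: "integrable Mo (Cf (Suc k))" by (rule Cf_int[OF lb vlb])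
  note t1 = transfer[OF f1i] and t0 = transfer[OF f0i]
  have f0c: "f0 (X(k := x)) = f0 X" for X x unfolding f0_def by (simp add: cl_upd)
  have inner0: "(\<integral>x. f0 (X(k := x)) \<partial>D) = f0 X" for X unfolding f0c by (simp add: D.prob_space)
  have "(\<integral>X. (\<integral>x. Cf (Suc k) (X(k := x)) \<partial>D) \<partial>P) \<le> (\<integral>X. (\<integral>x. f0 (X(k := x)) \<partial>D) \<partial>P)"
  proof (rule integral_mono_AE)
    show "integrable P (\<lambda>X. \<integral>x. Cf (Suc k) (X(k := x)) \<partial>D)" using t1 by blast
    show "integrable P (\<lambda>X. \<integral>x. f0 (X(k := x)) \<partial>D)" using t0 by blast
    from t1 have "AE X in P. integrable D (\<lambda>x. Cf (Suc k) (X(k := x)))" by blast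
    then show "AE X in P. (\<integral>x. Cf (Suc k) (X(k := x)) \<partial>D) \<le> (\<integral>x. f0 (X(k := x)) \<partial>D)"
    proof (rule AE_mp, intro AE_I2 impI)
      fix X assume iX: "integrable D (\<lambda>x. Cf (Suc k) (X(k := x)))"
      have iX2: "integrable D (\<lambda>w. J (k + 1) (fst (cl (X(k := w)) (k + 1))) (snd (cl (X(k := w)) (k + 1)))
                          - J k (fst (cl X k)) (snd (cl X k)))"
        using Bochner_Integration.integrable_diff[OF iX D.integrable_const] by simp
      have p1: "(\<integral>w. J (k + 1) (fst (cl (X(k := w)) (k + 1))) (snd (cl (X(k := w)) (k + 1)))
             - J k (fst (cl X k)) (snd (cl X k)) \<partial>D)
          \<le> - ell (fst (cl X k)) (cl_input K sol k (cl X k)) + trace (Pf ** Sw)"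
        by (rule part1[OF iX2])
      have "(\<integral>w. J (k + 1) (fst (cl (X(k := w)) (k + 1))) (snd (cl (X(k := w)) (k + 1)))
             - J k (fst (cl X k)) (snd (cl X k)) \<partial>D) = (\<integral>x. Cf (Suc k) (X(k := x)) \<partial>D) - Cf k X"
        using Bochner_Integration.integral_diff[OF iX D.integrable_const] by (simp add: D.prob_space)
      moreover have e2: "(\<integral>x. f0 (X(k := x)) \<partial>D) = Cf k X - Lf k X + trace (Pf ** Sw)"
        by (simp only: inner0) (simp add: f0_def tr_def)
      ultimately show "(\<integral>x. Cf (Suc k) (X(k := x)) \<partial>D) \<le> (\<integral>x. f0 (X(k := x)) \<partial>D)"
        using p1 by linarith
    qed
  qed
  then have "(\<integral>om. Cf (Suc k) om \<partial>Mo) \<le> (\<integral>om. f0 om \<partial>Mo)" using t1 t0 by simp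
  also have "\<dots> = (\<integral>om. Cf k om \<partial>Mo) - (\<integral>om. Lf k om \<partial>Mo) + tr"
    unfolding f0_def
    by (subst Bochner_Integration.integral_add, (intro Bochner_Integration.integrable_diff Cf_int[OF lb vlb] Lf_int[OF lb vlb] Mp.integrable_const)+)
       (subst Bochner_Integration.integral_diff, (intro Cf_int[OF lb vlb] Lf_int[OF lb vlb])+, simp add: Mp.prob_space)
  finally show ?thesis unfolding tr_def .
qed

lemma tele: "(\<Sum>k<T. \<integral>om. Lf k om \<partial>Mo) \<le> (\<integral>om. Cf 0 om \<partial>Mo) - (\<integral>om. Cf T om \<partial>Mo) + real T * trace (Pf ** Sw)"
proof (induction T)
  case 0 then show ?case by simp
next
  case (Suc T)
  then show ?case using step_exp[of T] by (simp add: algebra_simps)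
qed

lemma avg_bound:
  "\<exists>Kd. \<forall>T. (\<Sum>k<T. \<integral>om. Lf k om \<partial>Mo) \<le> Kd + real T * trace (Pf ** Sw)"
proof -
  interpret Mp: prob_space Mo by (rule Mo_prob)
  define Lb where "Lb = real N * c0 + Vm + covs"
  have "Lb \<le> (\<integral>om. Cf T om \<partial>Mo)" for T
  proof -
    have "(\<integral>om. Lb \<partial>Mo) \<le> (\<integral>om. Cf T om \<partial>Mo)"
      by (rule integral_mono[OF Mp.integrable_const Cf_int[OF lb vlb]]) (simp add: Lb_def J_lb[OF lb vlb])
    then show ?thesis by (simp add: Mp.prob_space)
  qed
  then show ?thesis using tele by (intro exI[of _ "(\<integral>om. Cf 0 om \<partial>Mo) - Lb"]) (smt (verit))
qed

lemma limsup_bound: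
  "limsup (\<lambda>T. ereal ((1 / real T) * (\<Sum>k<T. \<integral>om. Lf k om \<partial>Mo))) \<le> ereal (trace (Pf ** Sw))"
proof -
  obtain Kd where Kd: "\<And>T. (\<Sum>k<T. \<integral>om. Lf k om \<partial>Mo) \<le> Kd + real T * trace (Pf ** Sw)"
    using avg_bound by blast
  let ?tr = "trace (Pf ** Sw)"
  have ev: "eventually (\<lambda>T. ereal ((1 / real T) * (\<Sum>k<T. \<integral>om. Lf k om \<partial>Mo)) \<le> ereal (?tr + Kd / real T)) sequentially"
  proof (rule eventually_sequentiallyI[of 1])
    fix T :: nat assume T: "1 \<le> T"
    have "(1 / real T) * (\<Sum>k<T. \<integral>om. Lf k om \<partial>Mo) \<le> (1 / real T) * (Kd + real T * ?tr)"
      using Kd[of T] T by (intro mult_left_mono) auto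
    also have "\<dots> = ?tr + Kd / real T" using T by (simp add: field_simps)
    finally show "ereal ((1 / real T) * (\<Sum>k<T. \<integral>om. Lf k om \<partial>Mo)) \<le> ereal (?tr + Kd / real T)" by simp
  qed
  have lim: "(\<lambda>T. ereal (?tr + Kd / real T)) \<longlonglongrightarrow> ereal ?tr"
  proof -
    have "(\<lambda>T. Kd / real T) \<longlonglongrightarrow> 0" by (rule lim_const_over_n)
    from tendsto_add[OF tendsto_const this, of ?tr] show ?thesis unfolding lim_ereal by simp
  qed
  have "limsup (\<lambda>T. ereal ((1 / real T) * (\<Sum>k<T. \<integral>om. Lf k om \<partial>Mo))) \<le> limsup (\<lambda>T. ereal (?tr + Kd / real T))"
    by (rule Limsup_mono[OF ev])
  also have "\<dots> = ereal ?tr" by (rule lim_imp_Limsup[OF trivial_limit_sequentially lim])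
  finally show ?thesis .
qed

end
end


theorem proposition4:
  fixes A :: "real^'n^'n" and B :: "real^'m^'n" and K :: "real^'n^'m"
    and Q :: "real^'n^'n" and q :: "real^'n" and R :: "real^'m^'m" and r :: "real^'m"
    and Pf :: "real^'n^'n" and pf :: "real^'n"
    and Sw :: "real^'n^'n" and D :: "(real^'n) measure"
    and Zb :: "nat \<Rightarrow> ((real^'n) \<times> (real^'m)) set" and Xf :: "(real^'n) set"
    and N :: nat and x0 :: "real^'n"
    and sol :: "nat \<Rightarrow> real^'n \<Rightarrow> real^'n \<Rightarrow> ((nat \<Rightarrow> real^'n) \<times> (nat \<Rightarrow> real^'m) \<times> real)"
  defines "ell \<equiv> stage_cost Q q R r"
    and "J \<equiv> opt_val N A B K Q q R r Pf pf Sw Zb Xf"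
    and "M \<equiv> PiM UNIV (\<lambda>_::nat. D)"
    and "x \<equiv> (\<lambda>om k. fst (closed_loop A B K sol x0 om k))"
    and "u \<equiv> (\<lambda>om k. cl_input K sol k (closed_loop A B K sol x0 om k))"
  assumes N_pos: "1 \<le> N"
    and schur_AK: "schur (A + B ** K)"
    and Q_psd: "psd_mat Q" and R_psd: "psd_mat R"
    (* noise: w(k) i.i.d. with law D, zero mean, covariance Sw > 0 *)
    and D_prob: "prob_space D" and D_sets: "sets D = sets borel"
    and D_int1: "\<And>i. integrable D (\<lambda>w. w $ i)"
    and D_int2: "\<And>i j. integrable D (\<lambda>w. w $ i * w $ j)"
    and D_mean: "\<And>i. (\<integral>w. w $ i \<partial>D) = 0"
    and D_cov: "\<And>i j. (\<integral>w. w $ i * w $ j \<partial>D) = Sw $ i $ j"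
    and Sw_pd: "pd_mat Sw"
    (* terminal set and terminal cost *)
    and Xf_Zb: "\<And>z k. z \<in> Xf \<Longrightarrow> (z, K *v z) \<in> Zb k"
    and Xf_inv: "\<And>z. z \<in> Xf \<Longrightarrow> (A + B ** K) *v z \<in> Xf"
    and Vf_decr: "\<And>y. term_cost Pf pf ((A + B ** K) *v y) = term_cost Pf pf y - ell y (K *v y)"
    (* feasibility at k = 0, with z*_{1|-1} = x0 *)
    and feas0: "\<exists>d. feasible N A B Zb Xf 0 x0 x0 d"
    (* the controller applies a minimizer of P_k (Borel measurable selection) *)
    and sol_min: "\<And>k y zp. (\<exists>d. feasible N A B Zb Xf k y zp d) \<Longrightarrow>
        is_minimizer N A B K Q q R r Pf pf Sw Zb Xf k y zp (sol k y zp)"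
    and sol_meas: "\<And>k i.
        (\<lambda>p. fst (sol k (fst p) (snd p)) i) \<in> borel_measurable borel \<and>
        (\<lambda>p. fst (snd (sol k (fst p) (snd p))) i) \<in> borel_measurable borel \<and>
        (\<lambda>p. snd (snd (sol k (fst p) (snd p)))) \<in> borel_measurable borel"
  shows
    "(\<forall>om k.
        integrable D (\<lambda>w. J (k + 1) (x (om(k := w)) (k + 1))
                                      (snd (closed_loop A B K sol x0 (om(k := w)) (k + 1)))
                          - J k (x om k) (snd (closed_loop A B K sol x0 om k))) \<longrightarrow>
        (\<integral>w. J (k + 1) (x (om(k := w)) (k + 1))
                        (snd (closed_loop A B K sol x0 (om(k := w)) (k + 1)))
             - J k (x om k) (snd (closed_loop A B K sol x0 om k)) \<partial>D)
          \<le> - ell (x om k) (u om k) + trace (Pf ** Sw))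
     \<and>
     ((\<exists>c. \<forall>y v. c \<le> ell y v) \<longrightarrow>
        (\<forall>k. integrable M (\<lambda>om. ell (x om k) (u om k))) \<and>
        limsup (\<lambda>T. ereal ((1 / real T) * (\<Sum>k<T. \<integral>om. ell (x om k) (u om k) \<partial>M)))
          \<le> ereal (trace (Pf ** Sw)))"
proof -
  have vd: "\<And>y. term_cost Pf pf ((A + B ** K) *v y) = term_cost Pf pf y - stage_cost Q q R r y (K *v y)"
    using Vf_decr unfolding ell_def .
  interpret P: mpc A B K Q q R r Pf pf Sw D Zb Xf N x0 sol
    by (rule mpc.intro[OF N_pos schur_AK Q_psd R_psd D_prob D_sets D_int1 D_int2 D_mean D_cov
          Xf_Zb Xf_inv vd feas0 sol_min sol_meas])
  show ?thesis
    unfolding J_def x_def u_def ell_def M_def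
    apply (rule conjI)
     apply (intro allI impI)
     apply (rule P.part1, assumption)
    apply (intro impI)
    apply (elim exE)
    subgoal premises prems for c0
    proof -
      have lb: "\<And>y v. c0 \<le> stage_cost Q q R r y v" using prems by blast
      obtain Vm where vlb: "\<And>y. Vm \<le> term_cost Pf pf y" using P.Vf_lb[OF lb] by blast
      show ?thesis using P.Lf_int[OF lb vlb] P.limsup_bound[OF lb vlb] by blast
    qed
    done
qed

end
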